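(* Let $\Lambda=(\lambda_i)_{i=1}^{2S}$ be the eigenspectrum of a $2S\times2S$ quantum CM that does not satisfy the unique pairing condition. Then there exist two quantum CMs with eigenspectrum $\Lambda$ having different multisets of symplectic eigenvalues or different squeezing parameters; in particular the quantum CMs with eigenspectrum $\Lambda$ do not form a single orbit under the action $\Gamma\mapsto W\Gamma W^T$ of $\mathrm{SpO}(2S,\mathbb{R})$.
   Context: Fix $S\ge1$. Coordinates of $\mathbb{R}^{2S}$ are ordered as $(q_1,p_1,\dots,q_S,p_S)$. Let $\Omega=\bigoplus_{i=1}^S\begin{pmatrix}0&1\\-1&0\end{pmatrix}$. $\mathrm{SpO}(2S,\mathbb{R})$ is the group of real $2S\times2S$ matrices that are orthogonal and symplectic. A quantum CM is a real symmetric positive-definite $2S\times 2S$ matrix $\Gamma$ such that $\Gamma+i\Omega$ is positive semidefinite. Every quantum CM admits a decomposition $\Gamma=KQLTL^TQK^T$ where $K,L\in\mathrm{SpO}(2S,\mathbb{R})$, $Q=\bigoplus_i\mathrm{diag}(e^{r_i},e^{-r_i})$ and $T=\bigoplus_i\mathrm{diag}(\nu_i,\nu_i)$ with $\nu_i\ge1$; the $\nu_i$ are the symplectic eigenvalues (thermal parameters) and the $r_i$ the squeezing parameters. A diagonal matrix $\bigoplus_i\mathrm{diag}(a_i,b_i)$ with $a_ib_i\ge1$ for all $i$ is a quantum CM with thermal parameters $\sqrt{a_ib_i}$ and squeezing parameters $\pm\tfrac14\log(b_i/a_i)$. Let $\Lambda=(\lambda_i)_{i=1}^{2S}$ be the eigenvalues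 of a quantum CM in non-ascending order. Let $G(\Lambda)$ be the graph with vertex set $\{1,\dots,2S\}$ and edge set $\{\{i,j\}: i<j,\ \lambda_i\lambda_j\ge 1\}$. $\Lambda$ satisfies the unique pairing condition if $G(\Lambda)$ has a unique perfect matching up to permutations of vertices carrying equal eigenvalues. *)

theory Defs
  imports "Jordan_Normal_Form.Char_Poly" "Jordan_Normal_Form.Conjugate"
begin

text \<open>Mode k (0-based) occupies coordinates 2k (q) and 2k+1 (p), so coordinates are
  ordered (q_1,p_1,...,q_S,p_S). All matrices are 2S x 2S real matrices.\<close>

definition Omega :: "nat \<Rightarrow> real mat" where
  "Omega S = mat (2*S) (2*S) (\<lambda>(i,j).
      if even i \<and> j = i + 1 then 1 else if odd i \<and> i = j + 1 then -1 else 0)"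

definition SpO :: "nat \<Rightarrow> real mat set" where
  "SpO S = {W. W \<in> carrier_mat (2*S) (2*S) \<and>
                transpose_mat W * W = 1\<^sub>m (2*S) \<and>
                W * Omega S * transpose_mat W = Omega S}"

definition pos_def_real :: "nat \<Rightarrow> real mat \<Rightarrow> bool" where
  "pos_def_real n A \<longleftrightarrow> (\<forall>v \<in> carrier_vec n. v \<noteq> 0\<^sub>v n \<longrightarrow> v \<bullet> (A *\<^sub>v v) > 0)"

definition psd_complex :: "nat \<Rightarrow> complex mat \<Rightarrow> bool" where
  "psd_complex n M \<longleftrightarrow> M \<in> carrier_mat n n \<and>
     (\<forall>v \<in> carrier_vec n. conjugate v \<bullet> (M *\<^sub>v v) \<in> \<real> \<and>
                            Re (conjugate v \<bullet> (M *\<^sub>v v)) \<ge> 0)"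

definition quantum_CM :: "nat \<Rightarrow> real mat \<Rightarrow> bool" where
  "quantum_CM S \<Gamma> \<longleftrightarrow> \<Gamma> \<in> carrier_mat (2*S) (2*S) \<and> transpose_mat \<Gamma> = \<Gamma> \<and>
     pos_def_real (2*S) \<Gamma> \<and>
     psd_complex (2*S) (map_mat complex_of_real \<Gamma> + \<i> \<cdot>\<^sub>m map_mat complex_of_real (Omega S))"

definition Qmat :: "nat \<Rightarrow> real list \<Rightarrow> real mat" where
  "Qmat S r = mat (2*S) (2*S) (\<lambda>(i,j).
      if i = j then (if even i then exp (r ! (i div 2)) else exp (- (r ! (i div 2)))) else 0)"

definition Tmat :: "nat \<Rightarrow> real list \<Rightarrow> real mat" where
  "Tmat S \<nu> = mat (2*S) (2*S) (\<lambda>(i,j). if i = j then \<nu> ! (i div 2) else 0)"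

definition is_decomposition :: "nat \<Rightarrow> real mat \<Rightarrow> real list \<Rightarrow> real list \<Rightarrow> bool" where
  "is_decomposition S \<Gamma> r \<nu> \<longleftrightarrow> length r = S \<and> length \<nu> = S \<and> (\<forall>x \<in> set \<nu>. x \<ge> 1) \<and>
     (\<exists>K \<in> SpO S. \<exists>L \<in> SpO S.
        \<Gamma> = K * Qmat S r * L * Tmat S \<nu> * transpose_mat L * Qmat S r * transpose_mat K)"

definition CM_params :: "nat \<Rightarrow> real mat \<Rightarrow> (real list \<times> real list) set" where
  "CM_params S \<Gamma> = {(\<nu>, r). is_decomposition S \<Gamma> r \<nu>}"

definition eigenspectrum :: "nat \<Rightarrow> real mat \<Rightarrow> real list \<Rightarrow> bool" where
  "eigenspectrum S \<Gamma> \<Lambda> \<longleftrightarrow> \<Gamma> \<in> carrier_mat (2*S) (2*S) \<and> length \<Lambda> = 2*S \<and>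
     sorted_wrt (\<ge>) \<Lambda> \<and> char_poly \<Gamma> = (\<Prod>x \<leftarrow> \<Lambda>. [:- x, 1:])"

definition G_edge :: "real list \<Rightarrow> nat \<Rightarrow> nat \<Rightarrow> bool" where
  "G_edge \<Lambda> i j \<longleftrightarrow> i \<noteq> j \<and> i < length \<Lambda> \<and> j < length \<Lambda> \<and> \<Lambda> ! i * \<Lambda> ! j \<ge> 1"

text \<open>A perfect matching of G(\<Lambda>), given as a fixed-point-free involution of the
  vertex set matching each vertex to a neighbour.\<close>
definition perfect_matching :: "real list \<Rightarrow> (nat \<Rightarrow> nat) \<Rightarrow> bool" where
  "perfect_matching \<Lambda> m \<longleftrightarrow>
     (\<forall>i < length \<Lambda>. m i < length \<Lambda> \<and> m (m i) = i \<and> G_edge \<Lambda> i (m i))"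

definition matching_equiv :: "real list \<Rightarrow> (nat \<Rightarrow> nat) \<Rightarrow> (nat \<Rightarrow> nat) \<Rightarrow> bool" where
  "matching_equiv \<Lambda> m1 m2 \<longleftrightarrow>
     (\<exists>\<sigma>. bij_betw \<sigma> {0..<length \<Lambda>} {0..<length \<Lambda>} \<and>
          (\<forall>i < length \<Lambda>. \<Lambda> ! (\<sigma> i) = \<Lambda> ! i) \<and>
          (\<forall>i < length \<Lambda>. m2 (\<sigma> i) = \<sigma> (m1 i)))"

definition unique_pairing :: "real list \<Rightarrow> bool" where
  "unique_pairing \<Lambda> \<longleftrightarrow> (\<exists>m. perfect_matching \<Lambda> m) \<and>
     (\<forall>m1 m2. perfect_matching \<Lambda> m1 \<longrightarrow> perfect_matching \<Lambda> m2 \<longrightarrow> matching_equiv \<Lambda> m1 m2)"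

end

theory Submission
  imports Defs "Jordan_Normal_Form.Schur_Decomposition"
begin


definition diagm :: "nat \<Rightarrow> real list \<Rightarrow> real mat" where
  "diagm n es = mat n n (\<lambda>(i,j). if i = j then es ! i else 0)"

lemma orthonormal_cols:
  fixes ws :: "real vec list"
  assumes ws: "corthogonal ws" "set ws \<subseteq> carrier_vec n" "length ws = n"
  defines "us \<equiv> map (\<lambda>w. (1 / sqrt (w \<bullet> w)) \<cdot>\<^sub>v w) ws"
  shows "transpose_mat (mat_of_cols n us) * mat_of_cols n us = 1\<^sub>m n"
    and "mat_of_cols n us \<in> carrier_mat n n"
    and "\<And>i. i < n \<Longrightarrow> col (mat_of_cols n us) i = (1 / sqrt (ws!i \<bullet> ws!i)) \<cdot>\<^sub>v ws ! i"
proof -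
  have wc: "\<And>i. i < n \<Longrightarrow> ws ! i \<in> carrier_vec n" using ws by auto
  have orth: "\<And>i j. i < n \<Longrightarrow> j < n \<Longrightarrow> ws ! i \<bullet> ws ! j = 0 \<longleftrightarrow> i \<noteq> j"
    using corthogonalD[OF ws(1)] ws(3) by auto
  have pos: "\<And>i. i < n \<Longrightarrow> ws ! i \<bullet> ws ! i > 0"
  proof -
    fix i assume i: "i < n"
    have "ws ! i \<bullet> ws ! i \<ge> 0" using conjugate_square_ge_0_vec[of "ws ! i"] by simp
    moreover have "ws ! i \<bullet> ws ! i \<noteq> 0" using orth[OF i i] by simp
    ultimately show "ws ! i \<bullet> ws ! i > 0" by simp
  qed
  have usc: "\<And>i. i < n \<Longrightarrow> us ! i = (1 / sqrt (ws!i \<bullet> ws!i)) \<cdot>\<^sub>v ws ! i"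
    unfolding us_def using ws(3) by simp
  have usc': "\<And>i. i < n \<Longrightarrow> us ! i \<in> carrier_vec n" using usc wc by simp
  have lus: "length us = n" unfolding us_def using ws by simp
  show carr: "mat_of_cols n us \<in> carrier_mat n n" using mat_of_cols_carrier(1)[of n us] lus by simp
  show cols: "\<And>i. i < n \<Longrightarrow> col (mat_of_cols n us) i = (1 / sqrt (ws!i \<bullet> ws!i)) \<cdot>\<^sub>v ws ! i"
    using usc usc' lus by simp
  show "transpose_mat (mat_of_cols n us) * mat_of_cols n us = 1\<^sub>m n"
  proof (rule eq_matI)
    fix i j assume i: "i < dim_row (1\<^sub>m n)" and j: "j < dim_col (1\<^sub>m n)"
    hence i: "i < n" and j: "j < n" by auto
    have "(transpose_mat (mat_of_cols n us) * mat_of_cols n us) $$ (i, j)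
        = col (mat_of_cols n us) i \<bullet> col (mat_of_cols n us) j"
      using i j carr lus by (simp add: row_transpose)
    also have "\<dots> = (1 / sqrt (ws!i \<bullet> ws!i)) * (1 / sqrt (ws!j \<bullet> ws!j)) * (ws ! i \<bullet> ws ! j)"
      using cols[OF i] cols[OF j] wc[OF i] wc[OF j] by simp
    also have "\<dots> = 1\<^sub>m n $$ (i,j)"
    proof (cases "i = j")
      case True
      have p: "ws ! i \<bullet> ws ! i > 0" using pos[OF i] .
      have "sqrt (ws ! i \<bullet> ws ! i) * sqrt (ws ! i \<bullet> ws ! i) = ws ! i \<bullet> ws ! i"
        using p by simp
      then show ?thesis using True i p by (simp add: field_simps)
    next
      case False
      then show ?thesis using orth[OF i j] i j by simp
    qed
    finally show "(transpose_mat (mat_of_cols n us) * mat_of_cols n us) $$ (i, j) = 1\<^sub>m n $$ (i, j)" .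
  qed (use carr in auto)
qed

lemma assoc_dims: "dim_col (A::'a::semiring_0 mat) = dim_row B \<Longrightarrow> dim_col B = dim_row C \<Longrightarrow> A * B * C = A * (B * C)"
  by (metis assoc_mult_mat carrier_matI)

lemma char_poly_1x1: "char_poly (mat 1 1 (\<lambda>_. e)) = [:-(e::real), 1:]"
  by (simp add: char_poly_defs det_def sign_def)

lemma spectral:
  fixes A :: "real mat"
  assumes "A \<in> carrier_mat n n" "transpose_mat A = A"
    "char_poly A = (\<Prod>e\<leftarrow>es. [:-e,1:])"
  shows "\<exists>P \<in> carrier_mat n n. transpose_mat P * P = 1\<^sub>m n \<and> transpose_mat P * A * P = diagm n es"
  using assms
proof (induct es arbitrary: n A)
  case Nil
  then have "n = 0" using degree_monic_char_poly[OF Nil(1)] by simp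
  then show ?case using Nil by (intro bexI[of _ "1\<^sub>m 0"]) (auto intro!: eq_matI simp: diagm_def)
next
  case (Cons e es n A)
  note A = Cons(2) and sym = Cons(3) and cp = Cons(4)
  have evl: "eigenvalue A e" unfolding eigenvalue_root_char_poly[OF A] cp by simp
  define v where "v = find_eigenvector A e"
  have "eigenvector A v e" using find_eigenvector[OF A evl] v_def by simp
  hence v: "v \<in> carrier_vec n" "v \<noteq> 0\<^sub>v n" "A *\<^sub>v v = e \<cdot>\<^sub>v v" using A unfolding eigenvector_def by auto
  have n0: "n \<noteq> 0"
  proof
    assume "n = 0"
    then have "v = 0\<^sub>v n" using v(1) by (auto intro!: eq_vecI)
    then show False using v(2) by simp
  qed
  then obtain n1 where n: "n = Suc n1" by (cases n) auto
  interpret cof_vec_space n "TYPE(real)" .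
  define b where "b = basis_completion v"
  from basis_completion[OF v(1) v(2), folded b_def]
  have b: "set b \<subseteq> carrier_vec n" "distinct b" "\<not> lin_dep (set b)" "length b = n" "hd b = v" by auto
  define ws where "ws = gram_schmidt n b"
  from gram_schmidt_result[OF b(1) b(2) b(3) ws_def]
  have ws: "corthogonal ws" "set ws \<subseteq> carrier_vec n" "length ws = n" using b by auto
  obtain vs where bv: "b = v # vs" using b n by (cases b) auto
  have hdws: "hd ws = v" unfolding ws_def bv using v(1) by simp
  have ws0: "ws ! 0 = v" using hdws ws(3) n by (cases ws) auto
  define U where "U = mat_of_cols n (map (\<lambda>w. (1 / sqrt (w \<bullet> w)) \<cdot>\<^sub>v w) ws)"
  have UU: "transpose_mat U * U = 1\<^sub>m n" and U: "U \<in> carrier_mat n n"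
    and colU: "\<And>i. i < n \<Longrightarrow> col U i = (1 / sqrt (ws!i \<bullet> ws!i)) \<cdot>\<^sub>v ws ! i"
    using orthonormal_cols[OF ws] unfolding U_def by auto
  have UT: "transpose_mat U \<in> carrier_mat n n" using U by simp
  have UU': "U * transpose_mat U = 1\<^sub>m n" using mat_mult_left_right_inverse[OF UT U UU] .
  define c where "c = 1 / sqrt (v \<bullet> v)"
  have col0: "col U 0 = c \<cdot>\<^sub>v v" using colU[of 0] n ws0 c_def by simp
  define A' where "A' = transpose_mat U * A * U"
  have A': "A' \<in> carrier_mat n n" unfolding A'_def using U A by auto
  have symA': "transpose_mat A' = A'"
  proof -
    have "transpose_mat A' = transpose_mat (A * U) * transpose_mat (transpose_mat U)"
      unfolding A'_def using U A by (simp add: transpose_mult[of _ n n _ n])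
    also have "\<dots> = transpose_mat U * transpose_mat A * U"
      using U A by (simp add: transpose_mult[of _ n n _ n])
    finally show ?thesis using sym A'_def by simp
  qed
  have colA'0: "col A' 0 = e \<cdot>\<^sub>v unit_vec n 0"
  proof -
    have "col A' 0 = (transpose_mat U * A) *\<^sub>v col U 0"
      unfolding A'_def using U A n by (intro col_mult2) auto
    also have "\<dots> = transpose_mat U *\<^sub>v (A *\<^sub>v (c \<cdot>\<^sub>v v))" using U A v col0 by simp
    also have "\<dots> = transpose_mat U *\<^sub>v (c \<cdot>\<^sub>v (e \<cdot>\<^sub>v v))"
      using A v by (simp add: mult_mat_vec[OF A])
    also have "c \<cdot>\<^sub>v (e \<cdot>\<^sub>v v) = e \<cdot>\<^sub>v (c \<cdot>\<^sub>v v)"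
      by (simp add: smult_smult_assoc mult.commute)
    also have "transpose_mat U *\<^sub>v (e \<cdot>\<^sub>v (c \<cdot>\<^sub>v v)) = e \<cdot>\<^sub>v (transpose_mat U *\<^sub>v col U 0)"
      using U v col0 by (simp add: mult_mat_vec[of "transpose_mat U" n n])
    also have "transpose_mat U *\<^sub>v col U 0 = col (transpose_mat U * U) 0"
      by (rule col_mult2[symmetric]) (use U n in auto)
    also have "\<dots> = unit_vec n 0" using UU n by simp
    finally show ?thesis .
  qed
  have A'i0: "\<And>i. i < n \<Longrightarrow> A' $$ (i, 0) = (if i = 0 then e else 0)"
  proof -
    fix i assume i: "i < n"
    have "A' $$ (i, 0) = col A' 0 $ i" using A' i n by simp
    then show "A' $$ (i, 0) = (if i = 0 then e else 0)" using colA'0 i by simp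
  qed
  have A'sym: "\<And>i j. i < n \<Longrightarrow> j < n \<Longrightarrow> A' $$ (i, j) = A' $$ (j, i)"
  proof -
    fix i j assume i: "i < n" and j: "j < n"
    have "A' $$ (i,j) = transpose_mat A' $$ (i,j)" using symA' by simp
    also have "\<dots> = A' $$ (j,i)" using A' i j by simp
    finally show "A' $$ (i, j) = A' $$ (j, i)" .
  qed
  define A3 where "A3 = mat n1 n1 (\<lambda>(i,j). A' $$ (Suc i, Suc j))"
  have A3: "A3 \<in> carrier_mat n1 n1" unfolding A3_def by simp
  define A1 where "A1 = mat 1 1 (\<lambda>_. e)"
  have A1: "A1 \<in> carrier_mat 1 1" unfolding A1_def by simp
  have A'blk: "A' = four_block_mat A1 (0\<^sub>m 1 n1) (0\<^sub>m n1 1) A3"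
  proof (rule eq_matI)
    fix i j assume "i < dim_row (four_block_mat A1 (0\<^sub>m 1 n1) (0\<^sub>m n1 1) A3)"
      "j < dim_col (four_block_mat A1 (0\<^sub>m 1 n1) (0\<^sub>m n1 1) A3)"
    then have i: "i < n" and j: "j < n" using A1 A3 n by auto
    show "A' $$ (i, j) = four_block_mat A1 (0\<^sub>m 1 n1) (0\<^sub>m n1 1) A3 $$ (i, j)"
    proof (cases "i = 0 \<or> j = 0")
      case True
      have A'0j: "A' $$ (0, j) = (if j = 0 then e else 0)" using A'sym[OF _ j] A'i0[OF j] n by simp
      show ?thesis using True
      proof
        assume i0: "i = 0" then show ?thesis using A'0j j n A1 A3 by (simp add: A1_def)
      next
        assume j0: "j = 0" then show ?thesis using A'i0[OF i] i n A1 A3 by (simp add: A1_def)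
      qed
    next
      case False
      then obtain i' j' where "i = Suc i'" "j = Suc j'" by (cases i; cases j) auto
      then show ?thesis using i j n A1 A3 by (simp add: A3_def A1_def)
    qed
  qed (use A' A1 A3 n in auto)
  have symA3: "transpose_mat A3 = A3"
  proof (rule eq_matI)
    fix i j assume "i < dim_row A3" "j < dim_col A3"
    then have "i < n1" "j < n1" using A3 by auto
    then show "transpose_mat A3 $$ (i, j) = A3 $$ (i, j)"
      using A'sym[of "Suc j" "Suc i"] n by (simp add: A3_def)
  qed (use A3 in auto)
  have "similar_mat_wit A' A (transpose_mat U) U"
    unfolding similar_mat_wit_def Let_def
  proof (intro conjI)
    show "{A', A, transpose_mat U, U} \<subseteq> carrier_mat (dim_row A') (dim_row A')"
      using A' A U by auto
  qed (use A' U UU UU' A'_def in simp_all)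
  then have "similar_mat A' A" unfolding similar_mat_def by blast
  from char_poly_similar[OF this]
  have "char_poly A = char_poly A1 * char_poly A3"
    using char_poly_four_block_zeros_col[OF A1 _ A3, of "0\<^sub>m 1 n1"] A'blk by simp
  also have "char_poly A1 = [:-e, 1:]" unfolding A1_def by (rule char_poly_1x1)
  finally have e1: "char_poly A = [:-e, 1:] * char_poly A3" .
  have e2: "char_poly A = [:-e, 1:] * (\<Prod>e\<leftarrow>es. [:-e,1:])" using cp by simp
  have nz: "[:-e, 1:] \<noteq> (0 :: real poly)" by simp
  have cp3: "char_poly A3 = (\<Prod>e\<leftarrow>es. [:-e,1:])"
    using e1 e2 nz mult_cancel_left[of "[:-e, 1:]" "char_poly A3" "(\<Prod>e\<leftarrow>es. [:-e,1:])"] by simp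
  from Cons(1)[OF A3 symA3 cp3] obtain P3 where P3: "P3 \<in> carrier_mat n1 n1"
    and P3P3: "transpose_mat P3 * P3 = 1\<^sub>m n1" and P3A3: "transpose_mat P3 * A3 * P3 = diagm n1 es"
    by auto
  define B where "B = four_block_mat (1\<^sub>m 1) (0\<^sub>m 1 n1) (0\<^sub>m n1 1) P3"
  have B: "B \<in> carrier_mat n n" unfolding B_def using P3 n by auto
  have BT: "transpose_mat B = four_block_mat (1\<^sub>m 1) (0\<^sub>m 1 n1) (0\<^sub>m n1 1) (transpose_mat P3)"
    unfolding B_def using P3 by (subst transpose_four_block_mat) auto
  define P where "P = U * B"
  have P: "P \<in> carrier_mat n n" unfolding P_def using U B by auto
  have PT: "transpose_mat P = transpose_mat B * transpose_mat U"
    unfolding P_def using U B by (simp add: transpose_mult)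
  have "transpose_mat P * P = transpose_mat B * (transpose_mat U * U) * B"
    unfolding PT unfolding P_def using U B by (simp add: assoc_dims)
  also have "\<dots> = transpose_mat B * B" using UU B by simp
  also have "\<dots> = four_block_mat (1\<^sub>m 1) (0\<^sub>m 1 n1) (0\<^sub>m n1 1) (1\<^sub>m n1)"
    unfolding BT unfolding B_def using P3 P3P3
    by (subst mult_four_block_mat[of _ 1 1 _ n1 _ n1 _ _ 1 _ n1]) auto
  also have "\<dots> = 1\<^sub>m n" using n by (intro eq_matI) auto
  finally have PP: "transpose_mat P * P = 1\<^sub>m n" .
  have "transpose_mat P * A * P = transpose_mat B * A' * B"
    unfolding PT unfolding P_def A'_def using U B A by (simp add: assoc_dims)
  also have "\<dots> = four_block_mat A1 (0\<^sub>m 1 n1) (0\<^sub>m n1 1) (transpose_mat P3 * A3 * P3)"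
    unfolding BT A'blk unfolding B_def using P3 A1 A3
    by (simp add: mult_four_block_mat[of _ 1 1 _ n1 _ n1 _ _ 1 _ n1] assoc_mult_mat[of _ n1 n1])
  also have "\<dots> = diagm n (e # es)"
    unfolding P3A3 using n by (intro eq_matI) (auto simp: diagm_def A1_def nth_Cons')
  finally show ?case using P PP by blast
qed



lemma Omega_carrier[simp]: "Omega S \<in> carrier_mat (2*S) (2*S)"
  unfolding Omega_def by simp

lemma Omega_dims[simp]: "dim_row (Omega S) = 2*S" "dim_col (Omega S) = 2*S"
  unfolding Omega_def by simp_all

lemma Omega_mult_carrier[simp]: "u \<in> carrier_vec (2*S) \<Longrightarrow> Omega S *\<^sub>v u \<in> carrier_vec (2*S)"
  by (rule mult_mat_vec_carrier[OF Omega_carrier])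

lemma Omega_index: "i < 2*S \<Longrightarrow> j < 2*S \<Longrightarrow> Omega S $$ (i,j) =
   (if even i \<and> j = i + 1 then 1 else if odd i \<and> i = j + 1 then -1 else 0)"
  unfolding Omega_def by simp

lemma Omega_mult_vec:
  assumes u: "u \<in> carrier_vec (2*S)" and i: "i < 2*S"
  shows "(Omega S *\<^sub>v u) $ i = (if even i then u $ (i+1) else - u $ (i - 1))"
proof -
  have "(Omega S *\<^sub>v u) $ i = (\<Sum>j\<in>{0..<2*S}. Omega S $$ (i,j) * u $ j)"
    using u i by (auto simp: scalar_prod_def intro!: sum.cong)
  also have "\<dots> = (\<Sum>j\<in>{0..<2*S}. (if even i \<and> j = i + 1 then u $ j else if odd i \<and> i = j + 1 then - u $ j else 0))"
    by (rule sum.cong) (use i in \<open>auto simp: Omega_index\<close>)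
  also have "\<dots> = (if even i then u $ (i+1) else - u $ (i - 1))"
  proof (cases "even i")
    case True
    then have "i + 1 < 2*S" using i by presburger
    have "(\<Sum>j\<in>{0..<2*S}. (if even i \<and> j = i + 1 then u $ j else if odd i \<and> i = j + 1 then - u $ j else 0))
        = (\<Sum>j\<in>{0..<2*S}. (if j = i + 1 then u $ j else 0))"
      using True by (intro sum.cong) auto
    then show ?thesis using True \<open>i + 1 < 2*S\<close> by (simp add: sum.delta')
  next
    case False
    then have "i - 1 < 2*S" "i = (i - 1) + 1" using i by presburger+
    then have "(\<Sum>j\<in>{0..<2*S}. (if even i \<and> j = i + 1 then u $ j else if odd i \<and> i = j + 1 then - u $ j else 0))
        = (\<Sum>j\<in>{0..<2*S}. (if j = i - 1 then - u $ j else 0))"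
      using False by (intro sum.cong) auto
    then show ?thesis using False \<open>i - 1 < 2*S\<close> by (simp add: sum.delta')
  qed
  finally show ?thesis .
qed

lemma Omega_Omega_vec:
  assumes u: "u \<in> carrier_vec (2*S)"
  shows "Omega S *\<^sub>v (Omega S *\<^sub>v u) = - u"
proof (rule eq_vecI)
  fix i assume "i < dim_vec (- u)"
  then have i: "i < 2*S" using u by simp
  have Ou: "Omega S *\<^sub>v u \<in> carrier_vec (2*S)" using u by simp
  show "(Omega S *\<^sub>v (Omega S *\<^sub>v u)) $ i = (- u) $ i"
  proof (cases "even i")
    case True
    then have "i + 1 < 2*S" using i by presburger
    then show ?thesis using True i Omega_mult_vec[OF Ou i] Omega_mult_vec[OF u] u by simp
  next
    case False
    then have "i - 1 < 2*S" "even (i - 1)" "i - 1 + 1 = i" using i by presburger+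
    then show ?thesis using False i Omega_mult_vec[OF Ou i] Omega_mult_vec[OF u] u by simp
  qed
qed (use u in simp)

lemma Omega_transpose: "transpose_mat (Omega S) = - Omega S"
  by (rule eq_matI) (auto simp: Omega_index)

lemma Omega_norm:
  assumes u: "u \<in> carrier_vec (2*S)"
  shows "(Omega S *\<^sub>v u) \<bullet> (Omega S *\<^sub>v u) = u \<bullet> u"
proof -
  have "(Omega S *\<^sub>v u) \<bullet> (Omega S *\<^sub>v u) = (transpose_mat (Omega S) *\<^sub>v (Omega S *\<^sub>v u)) \<bullet> u"
    using transpose_vec_mult_scalar[OF Omega_carrier u, of "Omega S *\<^sub>v u"] u
      comm_scalar_prod[of "Omega S *\<^sub>v u" "2*S" "Omega S *\<^sub>v u"] by simp
  also have "transpose_mat (Omega S) *\<^sub>v (Omega S *\<^sub>v u) = - (Omega S *\<^sub>v (Omega S *\<^sub>v u))"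
    unfolding Omega_transpose using u by (intro eq_vecI) auto
  also have "\<dots> = u" using Omega_Omega_vec[OF u] by simp
  finally show ?thesis .
qed

lemma sprod_mat_sum:
  fixes G :: "'a::comm_semiring_0 mat"
  assumes "G \<in> carrier_mat n n" "x \<in> carrier_vec n" "y \<in> carrier_vec n"
  shows "x \<bullet> (G *\<^sub>v y) = (\<Sum>p<n. \<Sum>q<n. x $ p * G $$ (p,q) * y $ q)"
  using assms by (auto simp: scalar_prod_def sum_distrib_left mult.assoc lessThan_atLeast0 intro!: sum.cong)

lemma re_form:
  fixes G Om :: "real mat" and x y :: "real vec"
  assumes G: "G \<in> carrier_mat n n" and O: "Om \<in> carrier_mat n n" and x: "x \<in> carrier_vec n" and y: "y \<in> carrier_vec n"
  defines "w \<equiv> map_vec complex_of_real x + \<i> \<cdot>\<^sub>v map_vec complex_of_real y"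
  shows "Re (conjugate w \<bullet> ((map_mat complex_of_real G + \<i> \<cdot>\<^sub>m map_mat complex_of_real Om) *\<^sub>v w))
       = x \<bullet> (G *\<^sub>v x) + y \<bullet> (G *\<^sub>v y) - x \<bullet> (Om *\<^sub>v y) + y \<bullet> (Om *\<^sub>v x)"
proof -
  let ?M = "map_mat complex_of_real G + \<i> \<cdot>\<^sub>m map_mat complex_of_real Om"
  have M: "?M \<in> carrier_mat n n" using G O by auto
  have w: "w \<in> carrier_vec n" using x y unfolding w_def by auto
  have wi: "\<And>p. p < n \<Longrightarrow> w $ p = Complex (x $ p) (y $ p)"
    using x y unfolding w_def by (auto simp: Complex_eq)
  have cw: "conjugate w \<in> carrier_vec n" using w by simp
  have Mi: "\<And>p q. p < n \<Longrightarrow> q < n \<Longrightarrow> ?M $$ (p,q) = Complex (G $$ (p,q)) (Om $$ (p,q))"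
    using G O by (auto simp: Complex_eq)
  have cwi: "\<And>p. p < n \<Longrightarrow> conjugate w $ p = Complex (x $ p) (- y $ p)"
    using w wi by (simp add: conjugate_vec_def complex_eq_iff)
  have "conjugate w \<bullet> (?M *\<^sub>v w) = (\<Sum>p<n. \<Sum>q<n. conjugate w $ p * ?M $$ (p,q) * w $ q)"
    by (rule sprod_mat_sum[OF M cw w])
  also have "\<dots> = (\<Sum>p<n. \<Sum>q<n. Complex (x $ p) (- y $ p) * Complex (G $$ (p,q)) (Om $$ (p,q)) * Complex (x $ q) (y $ q))"
    by (intro sum.cong refl) (simp add: cwi Mi wi)
  finally have "Re (conjugate w \<bullet> (?M *\<^sub>v w)) = (\<Sum>p<n. \<Sum>q<n. Re (Complex (x $ p) (- y $ p) * Complex (G $$ (p,q)) (Om $$ (p,q)) * Complex (x $ q) (y $ q)))"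
    by (simp add: Re_sum)
  also have "\<dots> = (\<Sum>p<n. \<Sum>q<n. x $ p * G $$ (p,q) * x $ q + y $ p * G $$ (p,q) * y $ q
       - x $ p * Om $$ (p,q) * y $ q + y $ p * Om $$ (p,q) * x $ q)"
    by (intro sum.cong refl) (simp add: algebra_simps)
  also have "\<dots> = x \<bullet> (G *\<^sub>v x) + y \<bullet> (G *\<^sub>v y) - x \<bullet> (Om *\<^sub>v y) + y \<bullet> (Om *\<^sub>v x)"
    unfolding sprod_mat_sum[OF G x x] sprod_mat_sum[OF G y y] sprod_mat_sum[OF O x y] sprod_mat_sum[OF O y x]
    by (simp add: sum.distrib sum_subtractf)
  finally show ?thesis .
qed

lemma psd_ineq:
  assumes Q: "quantum_CM S \<Gamma>" and u: "u \<in> carrier_vec (2*S)" and u0: "u \<noteq> 0\<^sub>v (2*S)"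
  shows "(u \<bullet> (\<Gamma> *\<^sub>v u)) * ((Omega S *\<^sub>v u) \<bullet> (\<Gamma> *\<^sub>v (Omega S *\<^sub>v u))) \<ge> (u \<bullet> u)^2"
proof -
  have G: "\<Gamma> \<in> carrier_mat (2*S) (2*S)" using Q unfolding quantum_CM_def by auto
  have pd: "pos_def_real (2*S) \<Gamma>" using Q unfolding quantum_CM_def by auto
  have ps: "psd_complex (2*S) (map_mat complex_of_real \<Gamma> + \<i> \<cdot>\<^sub>m map_mat complex_of_real (Omega S))"
    using Q unfolding quantum_CM_def by auto
  define \<alpha> where "\<alpha> = u \<bullet> (\<Gamma> *\<^sub>v u)"
  define \<beta> where "\<beta> = (Omega S *\<^sub>v u) \<bullet> (\<Gamma> *\<^sub>v (Omega S *\<^sub>v u))"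
  define s where "s = u \<bullet> u"
  have \<alpha>: "\<alpha> > 0" using pd u u0 unfolding pos_def_real_def \<alpha>_def by auto
  define x where "x = s \<cdot>\<^sub>v u"
  define y where "y = (- \<alpha>) \<cdot>\<^sub>v (Omega S *\<^sub>v u)"
  have x: "x \<in> carrier_vec (2*S)" and y: "y \<in> carrier_vec (2*S)" using u unfolding x_def y_def by auto
  define w where "w = map_vec complex_of_real x + \<i> \<cdot>\<^sub>v map_vec complex_of_real y"
  have w: "w \<in> carrier_vec (2*S)" using x y unfolding w_def by auto
  have "Re (conjugate w \<bullet> ((map_mat complex_of_real \<Gamma> + \<i> \<cdot>\<^sub>m map_mat complex_of_real (Omega S)) *\<^sub>v w)) \<ge> 0"
    using ps w unfolding psd_complex_def by auto
  also have "Re (conjugate w \<bullet> ((map_mat complex_of_real \<Gamma> + \<i> \<cdot>\<^sub>m map_mat complex_of_real (Omega S)) *\<^sub>v w))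
     = x \<bullet> (\<Gamma> *\<^sub>v x) + y \<bullet> (\<Gamma> *\<^sub>v y) - x \<bullet> (Omega S *\<^sub>v y) + y \<bullet> (Omega S *\<^sub>v x)"
    unfolding w_def by (rule re_form[OF G Omega_carrier x y])
  also have "x \<bullet> (\<Gamma> *\<^sub>v x) = s * s * \<alpha>"
    unfolding x_def \<alpha>_def using u G by (simp add: mult_mat_vec[OF G])
  also have "y \<bullet> (\<Gamma> *\<^sub>v y) = \<alpha> * \<alpha> * \<beta>"
    unfolding y_def \<beta>_def using u G by (simp add: mult_mat_vec[OF G])
  also have "x \<bullet> (Omega S *\<^sub>v y) = s * \<alpha> * s"
    unfolding x_def y_def s_def using u
    by (simp add: mult_mat_vec[OF Omega_carrier] Omega_Omega_vec[OF u])
  also have "y \<bullet> (Omega S *\<^sub>v x) = - \<alpha> * s * s"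
    unfolding x_def y_def s_def using u
    by (simp add: mult_mat_vec[OF Omega_carrier] Omega_norm[OF u])
  finally have "0 \<le> \<alpha> * (\<alpha> * \<beta> - s * s)" by (simp add: algebra_simps)
  then have "\<alpha> * \<beta> - s * s \<ge> 0" using \<alpha> by (simp add: zero_le_mult_iff)
  then show ?thesis unfolding \<alpha>_def[symmetric] \<beta>_def[symmetric] s_def[symmetric] by (simp add: power2_eq_square)
qed



lemma diagm_carrier[simp]: "diagm n L \<in> carrier_mat n n" unfolding diagm_def by simp

lemma diagm_mult_vec:
  assumes a: "a \<in> carrier_vec n" and q: "q < n"
  shows "(diagm n L *\<^sub>v a) $ q = L ! q * a $ q"
proof -
  have "(diagm n L *\<^sub>v a) $ q = (\<Sum>j\<in>{0..<n}. (if q = j then L ! q else 0) * a $ j)"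
    using a q by (auto simp: scalar_prod_def diagm_def intro!: sum.cong)
  also have "\<dots> = (\<Sum>j\<in>{0..<n}. if q = j then L ! q * a $ j else 0)"
    by (intro sum.cong) auto
  also have "\<dots> = L ! q * a $ q" using q by simp
  finally show ?thesis .
qed

lemma qf_diag:
  fixes P G :: "real mat"
  assumes P: "P \<in> carrier_mat n n" and G: "G \<in> carrier_mat n n"
    and D: "transpose_mat P * G * P = diagm n L" and a: "a \<in> carrier_vec n"
  shows "(P *\<^sub>v a) \<bullet> (G *\<^sub>v (P *\<^sub>v a)) = (\<Sum>q<n. L ! q * (a $ q * a $ q))"
proof -
  have Pa: "P *\<^sub>v a \<in> carrier_vec n" using P a by simp
  have GPa: "G *\<^sub>v (P *\<^sub>v a) \<in> carrier_vec n" using G Pa by simp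
  have "(P *\<^sub>v a) \<bullet> (G *\<^sub>v (P *\<^sub>v a)) = (G *\<^sub>v (P *\<^sub>v a)) \<bullet> (P *\<^sub>v a)"
    using comm_scalar_prod[OF Pa GPa] .
  also have "\<dots> = (transpose_mat P *\<^sub>v (G *\<^sub>v (P *\<^sub>v a))) \<bullet> a"
    using transpose_vec_mult_scalar[OF P a GPa] by simp
  also have "transpose_mat P *\<^sub>v (G *\<^sub>v (P *\<^sub>v a)) = (transpose_mat P * G * P) *\<^sub>v a"
  proof -
    have "(transpose_mat P * G * P) *\<^sub>v a = (transpose_mat P * G) *\<^sub>v (P *\<^sub>v a)"
      by (rule assoc_mult_mat_vec) (use P G a in auto)
    also have "\<dots> = transpose_mat P *\<^sub>v (G *\<^sub>v (P *\<^sub>v a))"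
      by (rule assoc_mult_mat_vec) (use P G a in auto)
    finally show ?thesis by simp
  qed
  also have "\<dots> = diagm n L *\<^sub>v a" using D by simp
  also have "(diagm n L *\<^sub>v a) \<bullet> a = (\<Sum>q<n. L ! q * (a $ q * a $ q))"
    using a by (auto simp: scalar_prod_def diagm_mult_vec lessThan_atLeast0 mult.assoc intro!: sum.cong)
  finally show ?thesis .
qed

lemma norm_P:
  fixes P :: "real mat"
  assumes P: "P \<in> carrier_mat n n" and PP: "transpose_mat P * P = 1\<^sub>m n" and a: "a \<in> carrier_vec n"
  shows "(P *\<^sub>v a) \<bullet> (P *\<^sub>v a) = a \<bullet> a"
proof -
  have Pa: "P *\<^sub>v a \<in> carrier_vec n" using P a by simp
  have "(P *\<^sub>v a) \<bullet> (P *\<^sub>v a) = (transpose_mat P *\<^sub>v (P *\<^sub>v a)) \<bullet> a"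
    using transpose_vec_mult_scalar[OF P a Pa] by simp
  also have "transpose_mat P *\<^sub>v (P *\<^sub>v a) = (transpose_mat P * P) *\<^sub>v a" using P a by simp
  also have "\<dots> = a" using PP a by simp
  finally show ?thesis .
qed

lemma sq_pos_vec:
  fixes a :: "real vec"
  assumes "a \<in> carrier_vec n" "a \<noteq> 0\<^sub>v n"
  shows "a \<bullet> a > 0"
proof -
  have "a \<bullet> a \<ge> 0" using conjugate_square_ge_0_vec[of a] by simp
  moreover have "a \<bullet> a \<noteq> 0" using conjugate_square_eq_0_vec[OF assms(1)] assms(2) by simp
  ultimately show ?thesis by simp
qed

lemma cm_eig_pos:
  assumes Q: "quantum_CM S \<Gamma>" and P: "P \<in> carrier_mat (2*S) (2*S)" and PP: "transpose_mat P * P = 1\<^sub>m (2*S)"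
    and D: "transpose_mat P * \<Gamma> * P = diagm (2*S) L" and q: "q < 2*S"
  shows "L ! q > 0"
proof -
  let ?n = "2*S"
  have G: "\<Gamma> \<in> carrier_mat ?n ?n" and pd: "pos_def_real ?n \<Gamma>" using Q unfolding quantum_CM_def by auto
  define a :: "real vec" where "a = unit_vec ?n q"
  have a: "a \<in> carrier_vec ?n" unfolding a_def by simp
  have "a \<bullet> a = 1" unfolding a_def using q by simp
  then have "(P *\<^sub>v a) \<bullet> (P *\<^sub>v a) = 1" using norm_P[OF P PP a] by simp
  then have "P *\<^sub>v a \<noteq> 0\<^sub>v ?n" by auto
  then have "(P *\<^sub>v a) \<bullet> (\<Gamma> *\<^sub>v (P *\<^sub>v a)) > 0" using pd P a unfolding pos_def_real_def by auto
  also have "(P *\<^sub>v a) \<bullet> (\<Gamma> *\<^sub>v (P *\<^sub>v a)) = (\<Sum>p<?n. L ! p * (a $ p * a $ p))"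
    by (rule qf_diag[OF P G D a])
  also have "\<dots> = (\<Sum>p<?n. if p = q then L ! q else 0)"
    unfolding a_def by (intro sum.cong) (auto simp: unit_vec_def)
  also have "\<dots> = L ! q" using q by simp
  finally show ?thesis .
qed

lemma cm_pair:
  assumes Q: "quantum_CM S \<Gamma>" and P: "P \<in> carrier_mat (2*S) (2*S)" and PP: "transpose_mat P * P = 1\<^sub>m (2*S)"
    and D: "transpose_mat P * \<Gamma> * P = diagm (2*S) L" and sorted: "sorted_wrt (\<ge>) L"
    and len: "length L = 2*S" and j: "j < 2*S"
  shows "L ! j * L ! (2*S - 1 - j) \<ge> 1"
proof -
  define n where "n = 2*S"
  define t where "t = n - 1 - j"
  have tj: "t + j + 1 = n" "j < n" using j unfolding t_def n_def by auto
  have G: "\<Gamma> \<in> carrier_mat n n" and pd: "pos_def_real n \<Gamma>" using Q unfolding quantum_CM_def n_def by auto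
  have P': "P \<in> carrier_mat n n" and PP': "transpose_mat P * P = 1\<^sub>m n" and D': "transpose_mat P * \<Gamma> * P = diagm n L"
    using P PP D unfolding n_def by auto
  have PT: "transpose_mat P \<in> carrier_mat n n" using P' by simp
  have PPT: "P * transpose_mat P = 1\<^sub>m n" using mat_mult_left_right_inverse[OF PT P' PP'] .
  have Om: "Omega S \<in> carrier_mat n n" unfolding n_def by simp
  define Z where "Z = transpose_mat P * Omega S * P"
  have Z: "Z \<in> carrier_mat n n" unfolding Z_def using P' Om by auto
  define c where "c = (\<lambda>i. vec (j+1) (\<lambda>l. Z $$ (i, t + l)))"
  define E where "E = mat\<^sub>r (j+1) (j+1) (\<lambda>i. if i = j then 0\<^sub>v (j+1) else c i)"
  have E: "E \<in> carrier_mat (j+1) (j+1)" unfolding E_def by simp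
  have "det E = 0" unfolding E_def by (rule det_row_0) (auto simp: c_def)
  then obtain cc where cc: "cc \<in> carrier_vec (j+1)" "cc \<noteq> 0\<^sub>v (j+1)" "E *\<^sub>v cc = 0\<^sub>v (j+1)"
    using det_0_iff_vec_prod_zero[OF E] by auto
  have Ecc: "\<And>i. i < j \<Longrightarrow> (\<Sum>l\<in>{0..<j+1}. Z $$ (i, t + l) * cc $ l) = 0"
  proof -
    fix i assume i: "i < j"
    have "(E *\<^sub>v cc) $ i = 0" using cc(3) i by simp
    moreover have "(E *\<^sub>v cc) $ i = c i \<bullet> cc" using i E unfolding E_def by (simp add: c_def)
    ultimately show "(\<Sum>l\<in>{0..<j+1}. Z $$ (i, t + l) * cc $ l) = 0"
      using cc(1) by (simp add: c_def scalar_prod_def)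
  qed
  define a where "a = vec n (\<lambda>q. if t \<le> q then cc $ (q - t) else 0)"
  have a: "a \<in> carrier_vec n" unfolding a_def by simp
  obtain l where l: "l < j+1" "cc $ l \<noteq> 0"
  proof -
    have "\<exists>l < j+1. cc $ l \<noteq> 0"
    proof (rule ccontr)
      assume "\<not> (\<exists>l < j+1. cc $ l \<noteq> 0)"
      then have "cc = 0\<^sub>v (j+1)" using cc(1) by (intro eq_vecI) auto
      then show False using cc(2) by simp
    qed
    then show ?thesis using that by blast
  qed
  have a0: "a \<noteq> 0\<^sub>v n"
  proof
    assume "a = 0\<^sub>v n"
    then have "a $ (t + l) = 0" using l tj by simp
    then show False using l tj unfolding a_def by simp
  qed
  define u where "u = P *\<^sub>v a"
  define b where "b = Z *\<^sub>v a"
  have u: "u \<in> carrier_vec n" and b: "b \<in> carrier_vec n" unfolding u_def b_def using P' Z a by auto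
  have b0: "\<And>i. i < j \<Longrightarrow> b $ i = 0"
  proof -
    fix i assume i: "i < j"
    have "b $ i = (\<Sum>q\<in>{0..<n}. Z $$ (i,q) * a $ q)"
      unfolding b_def using Z a i tj by (auto simp: scalar_prod_def intro!: sum.cong)
    also have "\<dots> = (\<Sum>q\<in>{0..<n}. if t \<le> q then Z $$ (i,q) * cc $ (q - t) else 0)"
      unfolding a_def by (intro sum.cong) auto
    also have "\<dots> = (\<Sum>q\<in>{0..<n} \<inter> {q. t \<le> q}. Z $$ (i,q) * cc $ (q - t))"
      by (simp add: sum.inter_restrict)
    also have "{0..<n} \<inter> {q. t \<le> q} = {0 + t..<(j+1) + t}" using tj by auto
    also have "(\<Sum>q\<in>{0 + t..<(j+1) + t}. Z $$ (i,q) * cc $ (q - t)) = (\<Sum>l\<in>{0..<j+1}. Z $$ (i, l + t) * cc $ l)"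
      by (simp only: sum.shift_bounds_nat_ivl) simp
    also have "\<dots> = 0" using Ecc[OF i] by (simp add: add.commute)
    finally show "b $ i = 0" .
  qed
  have Pb: "P *\<^sub>v b = Omega S *\<^sub>v u"
  proof -
    have "Z *\<^sub>v a = transpose_mat P *\<^sub>v (Omega S *\<^sub>v u)"
    proof -
      have "Z *\<^sub>v a = (transpose_mat P * Omega S) *\<^sub>v (P *\<^sub>v a)"
        unfolding Z_def by (rule assoc_mult_mat_vec[of "transpose_mat P * Omega S" n n P n a]) (use P' Om a in auto)
      also have "\<dots> = transpose_mat P *\<^sub>v (Omega S *\<^sub>v u)"
        unfolding u_def by (rule assoc_mult_mat_vec[of "transpose_mat P" n n "Omega S" n]) (use P' Om a in auto)
      finally show ?thesis .
    qed
    then have "P *\<^sub>v b = (P * transpose_mat P) *\<^sub>v (Omega S *\<^sub>v u)"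
      unfolding b_def using P' Om u by (simp add: assoc_mult_mat_vec[of P n n "transpose_mat P" n])
    also have "\<dots> = Omega S *\<^sub>v u" using PPT Om u by simp
    finally show ?thesis .
  qed
  define s where "s = a \<bullet> a"
  have s: "s > 0" unfolding s_def by (rule sq_pos_vec[OF a a0])
  have uu: "u \<bullet> u = s" unfolding u_def s_def using norm_P[OF P' PP' a] .
  have bb: "b \<bullet> b = s"
  proof -
    have "b \<bullet> b = (P *\<^sub>v b) \<bullet> (P *\<^sub>v b)" using norm_P[OF P' PP' b] by simp
    also have "\<dots> = u \<bullet> u" unfolding Pb using Omega_norm[of u S] u unfolding n_def by simp
    finally show ?thesis using uu by simp
  qed
  have u0: "u \<noteq> 0\<^sub>v n" using uu s by auto
  define \<alpha> where "\<alpha> = u \<bullet> (\<Gamma> *\<^sub>v u)"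
  define \<beta> where "\<beta> = (Omega S *\<^sub>v u) \<bullet> (\<Gamma> *\<^sub>v (Omega S *\<^sub>v u))"
  have ab: "\<alpha> * \<beta> \<ge> s^2" using psd_ineq[OF Q, of u] u u0 uu unfolding \<alpha>_def \<beta>_def n_def by simp
  have \<alpha>pos: "\<alpha> > 0" using pd u u0 unfolding pos_def_real_def \<alpha>_def by auto
  have Ou: "Omega S *\<^sub>v u \<in> carrier_vec n" using u unfolding n_def by simp
  have Ou0: "Omega S *\<^sub>v u \<noteq> 0\<^sub>v n" using Omega_norm[of u S] u uu s unfolding n_def by auto
  have \<beta>pos: "\<beta> \<ge> 0" using pd Ou Ou0 unfolding pos_def_real_def \<beta>_def by (auto intro: less_imp_le)
  have \<alpha>le: "\<alpha> \<le> L ! t * s"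
  proof -
    have "\<alpha> = (\<Sum>q<n. L ! q * (a $ q * a $ q))" unfolding \<alpha>_def u_def by (rule qf_diag[OF P' G D' a])
    also have "\<dots> \<le> (\<Sum>q<n. L ! t * (a $ q * a $ q))"
    proof (rule sum_mono)
      fix q assume q: "q \<in> {..<n}"
      show "L ! q * (a $ q * a $ q) \<le> L ! t * (a $ q * a $ q)"
      proof (cases "t \<le> q")
        case True
        then have "L ! q \<le> L ! t" using sorted q len tj
          by (cases "t = q") (auto simp: sorted_wrt_iff_nth_less n_def)
        then show ?thesis by (intro mult_right_mono) auto
      next
        case False
        then show ?thesis unfolding a_def using q by simp
      qed
    qed
    also have "\<dots> = L ! t * s" unfolding s_def using a
      by (simp add: scalar_prod_def sum_distrib_left lessThan_atLeast0)
    finally show ?thesis .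
  qed
  have \<beta>le: "\<beta> \<le> L ! j * s"
  proof -
    have "\<beta> = (P *\<^sub>v b) \<bullet> (\<Gamma> *\<^sub>v (P *\<^sub>v b))" unfolding \<beta>_def Pb ..
    also have "\<dots> = (\<Sum>q<n. L ! q * (b $ q * b $ q))" by (rule qf_diag[OF P' G D' b])
    also have "\<dots> \<le> (\<Sum>q<n. L ! j * (b $ q * b $ q))"
    proof (rule sum_mono)
      fix q assume q: "q \<in> {..<n}"
      show "L ! q * (b $ q * b $ q) \<le> L ! j * (b $ q * b $ q)"
      proof (cases "j \<le> q")
        case True
        then have "L ! q \<le> L ! j" using sorted q len tj
          by (cases "j = q") (auto simp: sorted_wrt_iff_nth_less n_def)
        then show ?thesis by (intro mult_right_mono) auto
      next
        case False
        then show ?thesis using b0 by simp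
      qed
    qed
    also have "\<dots> = L ! j * (b \<bullet> b)" using b
      by (simp add: scalar_prod_def sum_distrib_left lessThan_atLeast0)
    also have "\<dots> = L ! j * s" using bb by simp
    finally show ?thesis .
  qed
  have "s^2 \<le> (L ! t * s) * (L ! j * s)"
    using ab mult_mono[OF \<alpha>le \<beta>le _ \<beta>pos] \<alpha>pos \<alpha>le by linarith
  then have "s * s * 1 \<le> s * s * (L ! t * L ! j)" by (simp add: power2_eq_square algebra_simps)
  then have "1 \<le> L ! t * L ! j" using s by (simp add: mult_le_cancel_left_pos)
  then show ?thesis unfolding t_def n_def by (simp add: mult.commute)
qed



definition Fm :: "real list \<Rightarrow> (nat \<Rightarrow> nat) \<Rightarrow> real" where
  "Fm L m = (\<Sum>i<length L. L ! i * L ! (m i))"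

definition locopt :: "real list \<Rightarrow> (nat \<Rightarrow> nat) \<Rightarrow> bool" where
  "locopt L m \<longleftrightarrow> (\<forall>i<length L. \<forall>j<length L. L ! i > L ! j \<longrightarrow> L ! (m i) \<le> L ! (m j))"

lemma swap_improve:
  assumes pm: "perfect_matching L m" and pos: "\<forall>k<length L. L ! k > 0"
    and i: "i < length L" and j: "j < length L"
    and lij: "L ! i > L ! j" and mij: "L ! (m i) > L ! (m j)"
  shows "\<exists>m'. perfect_matching L m' \<and> Fm L m' < Fm L m"
proof -
  let ?n = "length L"
  have mi: "m i < ?n" "m (m i) = i" "G_edge L i (m i)" using pm i unfolding perfect_matching_def by auto
  have mj: "m j < ?n" "m (m j) = j" "G_edge L j (m j)" using pm j unfolding perfect_matching_def by auto
  have d1: "i \<noteq> j" using lij by auto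
  have d2: "m i \<noteq> m j" using mij by auto
  have d3: "i \<noteq> m j"
  proof
    assume "i = m j"
    then have "m i = j" using mj by simp
    then show False using lij mij \<open>i = m j\<close> by simp
  qed
  have d4: "j \<noteq> m i"
  proof
    assume "j = m i"
    then have "m j = i" using mi by simp
    then show False using lij mij \<open>j = m i\<close> by simp
  qed
  have d5: "i \<noteq> m i" "j \<noteq> m j" using mi(3) mj(3) unfolding G_edge_def by auto
  have ej: "L ! j * L ! (m j) \<ge> 1" using mj(3) unfolding G_edge_def by auto
  have pj: "L ! j > 0" "L ! (m j) > 0" using pos j mj by auto
  have e1: "L ! i * L ! (m j) \<ge> 1"
  proof -
    have "L ! j * L ! (m j) \<le> L ! i * L ! (m j)" using lij pj by (intro mult_right_mono) auto
    then show ?thesis using ej by linarith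
  qed
  have e2: "L ! j * L ! (m i) \<ge> 1"
  proof -
    have "L ! j * L ! (m j) \<le> L ! j * L ! (m i)" using mij pj by (intro mult_left_mono) auto
    then show ?thesis using ej by linarith
  qed
  define m' where "m' = (\<lambda>x. if x = i then m j else if x = m j then i else if x = j then m i else if x = m i then j else m x)"
  define K where "K = {i, j, m i, m j}"
  have mx: "\<And>x. x < ?n \<Longrightarrow> x \<notin> K \<Longrightarrow> m x \<notin> K \<and> m x < ?n \<and> m (m x) = x \<and> G_edge L x (m x)"
  proof -
    fix x assume x: "x < ?n" "x \<notin> K"
    have px: "m x < ?n" "m (m x) = x" "G_edge L x (m x)" using pm x unfolding perfect_matching_def by auto
    have "m x \<notin> K"
    proof
      assume "m x \<in> K"
      then have "m (m x) \<in> m ` K" by blast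
      then have "x \<in> m ` K" using px by simp
      then show False using x mi mj unfolding K_def by auto
    qed
    then show "m x \<notin> K \<and> m x < ?n \<and> m (m x) = x \<and> G_edge L x (m x)" using px by simp
  qed
  have pm': "perfect_matching L m'"
    unfolding perfect_matching_def
  proof (intro allI impI)
    fix x assume x: "x < ?n"
    show "m' x < ?n \<and> m' (m' x) = x \<and> G_edge L x (m' x)"
    proof (cases "x \<in> K")
      case False
      then show ?thesis using mx[OF x False] unfolding m'_def K_def by auto
    next
      case True
      then show ?thesis unfolding K_def m'_def
        using d1 d2 d3 d4 d5 e1 e2 i j mi(1) mj(1)
        by (auto simp: G_edge_def mult.commute)
    qed
  qed
  have fin: "finite {..<?n}" by simp
  have Ksub: "K \<subseteq> {..<?n}" unfolding K_def using i j mi mj by auto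
  have split: "\<And>g. (\<Sum>x<?n. g x) = (\<Sum>x\<in>{..<?n} - K. g x) + (\<Sum>x\<in>K. g x)"
    using sum.subset_diff[OF Ksub fin] by simp
  have rest: "(\<Sum>x\<in>{..<?n} - K. L ! x * L ! (m' x)) = (\<Sum>x\<in>{..<?n} - K. L ! x * L ! (m x))"
    by (intro sum.cong) (auto simp: m'_def K_def)
  have Km: "(\<Sum>x\<in>K. L ! x * L ! (m x)) = 2 * (L ! i * L ! (m i) + L ! j * L ! (m j))"
    unfolding K_def using d1 d2 d3 d4 d5 mi mj by (simp add: algebra_simps)
  have Km': "(\<Sum>x\<in>K. L ! x * L ! (m' x)) = 2 * (L ! i * L ! (m j) + L ! j * L ! (m i))"
    unfolding K_def m'_def using d1 d2 d3 d4 d5 by (simp add: algebra_simps)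
  have "Fm L m - Fm L m' = 2 * ((L ! i - L ! j) * (L ! (m i) - L ! (m j)))"
    unfolding Fm_def split[of "\<lambda>x. L ! x * L ! (m x)"] split[of "\<lambda>x. L ! x * L ! (m' x)"] rest Km Km'
    by (simp add: algebra_simps)
  also have "\<dots> > 0" using lij mij by simp
  finally show ?thesis using pm' by auto
qed

lemma sorted_ge: "sorted_wrt (\<ge>) (L::real list) \<Longrightarrow> x \<le> y \<Longrightarrow> y < length L \<Longrightarrow> L ! y \<le> L ! x"
  by (cases "x = y") (auto simp: sorted_wrt_iff_nth_less)

lemma locopt_rank:
  assumes pm: "perfect_matching L m" and lo: "locopt L m" and sorted: "sorted_wrt (\<ge>) L"
  shows "\<exists>r. bij_betw r {0..<length L} {0..<length L} \<and> (\<forall>i<length L. L ! (r i) = L ! i)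
            \<and> (\<forall>i<length L. r (m i) = length L - 1 - r i)"
proof -
  define n where "n = length L"
  define A where "A = {0..<n}"
  have mA: "\<And>i. i \<in> A \<Longrightarrow> m i \<in> A \<and> m (m i) = i \<and> m i \<noteq> i"
    using pm unfolding perfect_matching_def G_edge_def A_def n_def by fastforce
  define k3 where "k3 = (\<lambda>i. if i < m i then i else 2*n - m i)"
  have k3m: "\<And>i. i \<in> A \<Longrightarrow> k3 (m i) = 2*n - k3 i"
  proof -
    fix i assume i: "i \<in> A"
    have mi: "m i < n" "m (m i) = i" "m i \<noteq> i" using mA[OF i] unfolding A_def by auto
    show "k3 (m i) = 2*n - k3 i"
    proof (cases "i < m i")
      case True
      then show ?thesis using mi unfolding k3_def by simp
    next
      case False
      then have "m i < i" using mi by simp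
      then show ?thesis using mi False unfolding k3_def by simp
    qed
  qed
  have k3le: "\<And>i. i \<in> A \<Longrightarrow> k3 i \<le> 2*n" unfolding k3_def A_def by auto
  have k3inj: "\<And>i j. i \<in> A \<Longrightarrow> j \<in> A \<Longrightarrow> k3 i = k3 j \<Longrightarrow> i = j"
  proof -
    fix i j assume i: "i \<in> A" and j: "j \<in> A" and e: "k3 i = k3 j"
    have mi: "m i < n" "m (m i) = i" "m j < n" "m (m j) = j" "i < n" "j < n"
      using mA i j unfolding A_def by auto
    show "i = j"
    proof (cases "i < m i")
      case ci: True
      show ?thesis
      proof (cases "j < m j")
        case True then show ?thesis using ci e unfolding k3_def by simp
      next
        case False then have "k3 j = 2*n - m j" unfolding k3_def by simp
        moreover have "k3 i = i" using ci unfolding k3_def by simp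
        ultimately show ?thesis using e mi by linarith
      qed
    next
      case ci: False
      then have ki: "k3 i = 2*n - m i" unfolding k3_def by simp
      show ?thesis
      proof (cases "j < m j")
        case True then have "k3 j = j" unfolding k3_def by simp
        then show ?thesis using ki e mi by linarith
      next
        case False then have "k3 j = 2*n - m j" unfolding k3_def by simp
        then have "m i = m j" using ki e mi by linarith
        then show ?thesis using mi by metis
      qed
    qed
  qed
  define bef where "bef = (\<lambda>i j. L ! i > L ! j \<or> (L ! i = L ! j \<and> (L ! (m i) < L ! (m j) \<or> (L ! (m i) = L ! (m j) \<and> k3 i < k3 j))))"
  have irr: "\<And>i. \<not> bef i i" unfolding bef_def by auto
  have trans: "\<And>i j k. bef i j \<Longrightarrow> bef j k \<Longrightarrow> bef i k" unfolding bef_def by auto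
  have total: "\<And>i j. i \<in> A \<Longrightarrow> j \<in> A \<Longrightarrow> i \<noteq> j \<Longrightarrow> bef i j \<or> bef j i"
  proof -
    fix i j assume "i \<in> A" "j \<in> A" "i \<noteq> j"
    then have "k3 i \<noteq> k3 j" using k3inj by blast
    then show "bef i j \<or> bef j i" unfolding bef_def by auto
  qed
  have rev: "\<And>i j. i \<in> A \<Longrightarrow> j \<in> A \<Longrightarrow> bef i j \<Longrightarrow> bef (m j) (m i)"
  proof -
    fix i j assume i: "i \<in> A" and j: "j \<in> A" and b: "bef i j"
    have mm: "m (m i) = i" "m (m j) = j" using mA i j by auto
    have k: "k3 (m i) = 2*n - k3 i" "k3 (m j) = 2*n - k3 j" using k3m i j by auto
    have lo': "L ! i > L ! j \<Longrightarrow> L ! (m i) \<le> L ! (m j)" using lo i j unfolding locopt_def A_def n_def by auto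
    show "bef (m j) (m i)"
      using b lo' k3le[OF i] k3le[OF j] unfolding bef_def mm k by auto
  qed
  define r where "r = (\<lambda>i. card {x\<in>A. bef x i})"
  have finA: "finite A" unfolding A_def by simp
  have cardA: "card A = n" unfolding A_def by simp
  have rlt: "\<And>i. i \<in> A \<Longrightarrow> r i < n"
  proof -
    fix i assume i: "i \<in> A"
    have "{x\<in>A. bef x i} \<subseteq> A - {i}" using irr by auto
    then have "r i \<le> card (A - {i})" unfolding r_def by (intro card_mono) (use finA in auto)
    also have "\<dots> = n - 1" using i cardA finA by simp
    finally show "r i < n" using i unfolding A_def by auto
  qed
  have rinj: "inj_on r A"
  proof (rule inj_onI)
    fix i j assume i: "i \<in> A" and j: "j \<in> A" and e: "r i = r j"
    show "i = j"
    proof (rule ccontr)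
      assume ne: "i \<noteq> j"
      have lt: "\<And>a b. a \<in> A \<Longrightarrow> b \<in> A \<Longrightarrow> bef a b \<Longrightarrow> r a < r b"
      proof -
        fix a b assume a: "a \<in> A" and b: "b \<in> A" and ab: "bef a b"
        have "{x\<in>A. bef x a} \<subseteq> {x\<in>A. bef x b}" using trans[OF _ ab] by auto
        moreover have "a \<in> {x\<in>A. bef x b}" "a \<notin> {x\<in>A. bef x a}" using a ab irr by auto
        ultimately have "{x\<in>A. bef x a} \<subset> {x\<in>A. bef x b}" by blast
        then show "r a < r b" unfolding r_def by (intro psubset_card_mono) (use finA in auto)
      qed
      from total[OF i j ne] show False using lt[OF i j] lt[OF j i] e by auto
    qed
  qed
  have rA: "r ` A \<subseteq> A" using rlt unfolding A_def by auto
  have rbij: "bij_betw r A A" unfolding bij_betw_def using rinj endo_inj_surj[OF finA rA rinj] by simp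
  have rm: "\<And>i. i \<in> A \<Longrightarrow> r (m i) = n - 1 - r i"
  proof -
    fix i assume i: "i \<in> A"
    have mi: "m i \<in> A" "m (m i) = i" using mA i by auto
    have minj: "inj_on m A" by (rule inj_onI) (metis mA)
    have eq: "{x\<in>A. bef x (m i)} = m ` {y\<in>A. bef i y}"
    proof
      show "{x\<in>A. bef x (m i)} \<subseteq> m ` {y\<in>A. bef i y}"
      proof
        fix x assume x: "x \<in> {x\<in>A. bef x (m i)}"
        then have "bef (m (m i)) (m x)" using rev[OF _ mi(1)] by auto
        then have "bef i (m x)" using mi by simp
        moreover have "x = m (m x)" "m x \<in> A" using mA x by auto
        ultimately show "x \<in> m ` {y\<in>A. bef i y}" by blast
      qed
    next
      show "m ` {y\<in>A. bef i y} \<subseteq> {x\<in>A. bef x (m i)}"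
        using rev[OF i] mA by auto
    qed
    have "r (m i) = card {y\<in>A. bef i y}"
      unfolding r_def eq by (rule card_image) (use minj in \<open>auto intro: inj_on_subset\<close>)
    also have "{y\<in>A. bef i y} = (A - {i}) - {x\<in>A. bef x i}"
    proof (intro equalityI subsetI)
      fix y assume y: "y \<in> {y\<in>A. bef i y}"
      then have "y \<noteq> i" using irr by auto
      moreover have "\<not> bef y i" using y irr trans[of i y i] by auto
      ultimately show "y \<in> (A - {i}) - {x\<in>A. bef x i}" using y by auto
    next
      fix y assume y: "y \<in> (A - {i}) - {x\<in>A. bef x i}"
      then have "y \<in> A" "y \<noteq> i" "\<not> bef y i" by auto
      then show "y \<in> {y\<in>A. bef i y}" using total[OF i, of y] by auto
    qed
    also have "card \<dots> = card (A - {i}) - card {x\<in>A. bef x i}"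
      by (rule card_Diff_subset) (use finA irr in auto)
    also have "\<dots> = n - 1 - r i" unfolding r_def using i cardA finA by simp
    finally show "r (m i) = n - 1 - r i" .
  qed
  have rL: "\<And>i. i \<in> A \<Longrightarrow> L ! (r i) = L ! i"
  proof -
    fix i assume i: "i \<in> A"
    define k where "k = r i"
    have kn: "k < n" using rlt[OF i] k_def by simp
    define Sg where "Sg = {x\<in>A. L ! x > L ! i}"
    define Ge where "Ge = {x\<in>A. L ! x \<ge> L ! i}"
    have "Sg \<subseteq> {x\<in>A. bef x i}" unfolding Sg_def bef_def by auto
    then have c1: "card Sg \<le> k" unfolding k_def r_def by (intro card_mono) (use finA in auto)
    have "{x\<in>A. bef x i} \<subseteq> Ge - {i}" unfolding Ge_def bef_def by auto
    then have "k \<le> card (Ge - {i})" unfolding k_def r_def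
      by (intro card_mono) (use finA Ge_def in auto)
    moreover have "i \<in> Ge" "finite Ge" using i finA unfolding Ge_def by auto
    ultimately have c2: "k < card Ge"
    proof -
      assume a1: "k \<le> card (Ge - {i})" and a2: "i \<in> Ge" and a3: "finite Ge"
      have "card (Ge - {i}) = card Ge - 1" using a2 by (rule card_Diff_singleton)
      moreover have "card Ge > 0" using a2 a3 card_gt_0_iff by blast
      ultimately show ?thesis using a1 by linarith
    qed
    have "L ! k \<ge> L ! i"
    proof (rule ccontr)
      assume "\<not> L ! k \<ge> L ! i"
      then have lk: "L ! k < L ! i" by simp
      have "Ge \<subseteq> {0..<k}"
      proof
        fix x assume x: "x \<in> Ge"
        then have xn: "x < n" and lx: "L ! x \<ge> L ! i" unfolding Ge_def A_def by auto
        show "x \<in> {0..<k}"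
        proof (rule ccontr)
          assume "x \<notin> {0..<k}"
          then have "k \<le> x" by simp
          then have "L ! x \<le> L ! k" using sorted_ge[OF sorted, of k x] xn n_def by simp
          then show False using lx lk by simp
        qed
      qed
      then have "card Ge \<le> k" using card_mono[of "{0..<k}" Ge] by simp
      then show False using c2 by simp
    qed
    moreover have "L ! k \<le> L ! i"
    proof (rule ccontr)
      assume "\<not> L ! k \<le> L ! i"
      then have lk: "L ! k > L ! i" by simp
      have "{0..<k+1} \<subseteq> Sg"
      proof
        fix x assume x: "x \<in> {0..<k+1}"
        then have "x \<le> k" by simp
        then have "L ! k \<le> L ! x" using sorted_ge[OF sorted, of x k] kn n_def by simp
        then show "x \<in> Sg" using lk kn \<open>x \<le> k\<close> unfolding Sg_def A_def by auto
      qed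
      then have "k + 1 \<le> card Sg" using card_mono[of Sg "{0..<k+1}"] finA unfolding Sg_def by simp
      then show False using c1 by simp
    qed
    ultimately show "L ! (r i) = L ! i" unfolding k_def by simp
  qed
  show ?thesis using rbij rm rL unfolding A_def n_def by auto
qed

lemma locopt_equiv:
  assumes pm1: "perfect_matching L m1" and lo1: "locopt L m1"
    and pm2: "perfect_matching L m2" and lo2: "locopt L m2" and sorted: "sorted_wrt (\<ge>) L"
  shows "matching_equiv L m1 m2"
proof -
  define A where "A = {0..<length L}"
  obtain r1 where r1: "bij_betw r1 A A" "\<And>i. i \<in> A \<Longrightarrow> L ! (r1 i) = L ! i"
    "\<And>i. i \<in> A \<Longrightarrow> r1 (m1 i) = length L - 1 - r1 i"
    using locopt_rank[OF pm1 lo1 sorted] unfolding A_def by auto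
  obtain r2 where r2: "bij_betw r2 A A" "\<And>i. i \<in> A \<Longrightarrow> L ! (r2 i) = L ! i"
    "\<And>i. i \<in> A \<Longrightarrow> r2 (m2 i) = length L - 1 - r2 i"
    using locopt_rank[OF pm2 lo2 sorted] unfolding A_def by auto
  define \<sigma> where "\<sigma> = (\<lambda>i. inv_into A r2 (r1 i))"
  have inv: "bij_betw (inv_into A r2) A A" using bij_betw_inv_into[OF r2(1)] .
  have sb: "bij_betw \<sigma> A A" unfolding \<sigma>_def using bij_betw_trans[OF r1(1) inv] by (simp add: comp_def)
  have sA: "\<And>i. i \<in> A \<Longrightarrow> \<sigma> i \<in> A" using sb bij_betwE by blast
  have r2s: "\<And>i. i \<in> A \<Longrightarrow> r2 (\<sigma> i) = r1 i"
  proof -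
    fix i assume i: "i \<in> A"
    have "r1 i \<in> r2 ` A" using r1(1) r2(1) i unfolding bij_betw_def by auto
    then show "r2 (\<sigma> i) = r1 i" unfolding \<sigma>_def by (rule f_inv_into_f)
  qed
  have m1A: "\<And>i. i \<in> A \<Longrightarrow> m1 i \<in> A" using pm1 unfolding perfect_matching_def A_def by auto
  have m2A: "\<And>i. i \<in> A \<Longrightarrow> m2 i \<in> A" using pm2 unfolding perfect_matching_def A_def by auto
  have inj2: "inj_on r2 A" using r2(1) unfolding bij_betw_def by auto
  show ?thesis unfolding matching_equiv_def
  proof (intro exI[of _ \<sigma>] conjI allI impI)
    show "bij_betw \<sigma> {0..<length L} {0..<length L}" using sb unfolding A_def .
  next
    fix i assume "i < length L"
    then have i: "i \<in> A" unfolding A_def by simp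
    have "L ! (\<sigma> i) = L ! (r2 (\<sigma> i))" using r2(2)[OF sA[OF i]] by simp
    also have "\<dots> = L ! i" using r2s[OF i] r1(2)[OF i] by simp
    finally show "L ! (\<sigma> i) = L ! i" .
  next
    fix i assume "i < length L"
    then have i: "i \<in> A" unfolding A_def by simp
    have "r2 (m2 (\<sigma> i)) = r2 (\<sigma> (m1 i))"
      using r2(3)[OF sA[OF i]] r2s[OF i] r2s[OF m1A[OF i]] r1(3)[OF i] by simp
    then show "m2 (\<sigma> i) = \<sigma> (m1 i)"
      using inj2 m2A[OF sA[OF i]] sA[OF m1A[OF i]] by (auto dest: inj_onD)
  qed
qed

lemma two_values:
  assumes sorted: "sorted_wrt (\<ge>) L" and ev: "even (length L)"
    and pos: "\<forall>k<length L. L ! k > 0"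
    and pair: "\<forall>j<length L. L ! j * L ! (length L - 1 - j) \<ge> 1"
    and nu: "\<not> unique_pairing L"
  shows "\<exists>m1 m2. perfect_matching L m1 \<and> perfect_matching L m2 \<and> Fm L m1 < Fm L m2"
proof -
  let ?n = "length L"
  define m0 where "m0 = (\<lambda>i. ?n - 1 - i)"
  have "perfect_matching L m0"
    unfolding perfect_matching_def G_edge_def m0_def
  proof (intro allI impI conjI)
    fix i assume i: "i < ?n"
    show "?n - 1 - i < ?n" using i by simp
    show "?n - 1 - (?n - 1 - i) = i" using i by simp
    show "i \<noteq> ?n - 1 - i" using i ev by presburger
    show "?n - 1 - i < ?n" using i by simp
    show "L ! i * L ! (?n - 1 - i) \<ge> 1" using pair i by simp
  qed (simp)
  then obtain m1 m2 where pm1: "perfect_matching L m1" and pm2: "perfect_matching L m2"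
    and ne: "\<not> matching_equiv L m1 m2"
    using nu unfolding unique_pairing_def by blast
  have "\<not> locopt L m1 \<or> \<not> locopt L m2" using locopt_equiv[OF pm1 _ pm2 _ sorted] ne by blast
  then obtain m where pm: "perfect_matching L m" and nlo: "\<not> locopt L m" using pm1 pm2 by blast
  then obtain i j where "i < ?n" "j < ?n" "L ! i > L ! j" "L ! (m i) > L ! (m j)"
    unfolding locopt_def by (auto simp: not_le)
  from swap_improve[OF pm pos this] obtain m' where "perfect_matching L m'" "Fm L m' < Fm L m" by blast
  then show ?thesis using pm by blast
qed



lemma assoc_mv_dims: "dim_col (A::'a::semiring_0 mat) = dim_row B \<Longrightarrow> dim_vec v = dim_col B \<Longrightarrow> (A * B) *\<^sub>v v = A *\<^sub>v (B *\<^sub>v v)"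
  by (metis assoc_mult_mat_vec carrier_matI carrier_vecI)

lemma Tmat_dims[simp]: "dim_row (Tmat S \<nu>) = 2*S" "dim_col (Tmat S \<nu>) = 2*S"
  unfolding Tmat_def by simp_all

definition mtr :: "real mat \<Rightarrow> real" where "mtr M = (\<Sum>i<dim_row M. M $$ (i,i))"

lemma mtr_comm:
  assumes A: "A \<in> carrier_mat n m" and B: "B \<in> carrier_mat m n"
  shows "mtr (A * B) = mtr (B * A)"
proof -
  have "mtr (A * B) = (\<Sum>i<n. \<Sum>k<m. A $$ (i,k) * B $$ (k,i))"
    unfolding mtr_def using A B by (auto simp: scalar_prod_def lessThan_atLeast0 intro!: sum.cong)
  also have "\<dots> = (\<Sum>k<m. \<Sum>i<n. B $$ (k,i) * A $$ (i,k))"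
    by (subst sum.swap) (simp add: mult.commute)
  also have "\<dots> = mtr (B * A)"
    unfolding mtr_def using A B by (auto simp: scalar_prod_def lessThan_atLeast0 intro!: sum.cong)
  finally show ?thesis .
qed

lemma diagm_mult_left:
  assumes M: "M \<in> carrier_mat n n" and i: "i < n" and j: "j < n"
  shows "(diagm n a * M) $$ (i,j) = a ! i * M $$ (i,j)"
proof -
  have "(diagm n a * M) $$ (i,j) = (\<Sum>k\<in>{0..<n}. (if i = k then a ! i else 0) * M $$ (k,j))"
    using M i j by (auto simp: scalar_prod_def diagm_def intro!: sum.cong)
  also have "\<dots> = (\<Sum>k\<in>{0..<n}. if i = k then a ! i * M $$ (k,j) else 0)" by (intro sum.cong) auto
  also have "\<dots> = a ! i * M $$ (i,j)" using i by simp
  finally show ?thesis .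
qed

lemma diagm_mult_right:
  assumes M: "M \<in> carrier_mat n n" and i: "i < n" and j: "j < n"
  shows "(M * diagm n b) $$ (i,j) = M $$ (i,j) * b ! j"
proof -
  have "(M * diagm n b) $$ (i,j) = (\<Sum>k\<in>{0..<n}. M $$ (i,k) * (if k = j then b ! j else 0))"
    using M i j by (auto simp: scalar_prod_def diagm_def intro!: sum.cong)
  also have "\<dots> = (\<Sum>k\<in>{0..<n}. if k = j then M $$ (i,k) * b ! j else 0)" by (intro sum.cong) auto
  also have "\<dots> = M $$ (i,j) * b ! j" using j by simp
  finally show ?thesis .
qed

lemma diagm_transpose: "transpose_mat (diagm n a) = diagm n a"
  by (rule eq_matI) (auto simp: diagm_def)

definition qdiag :: "nat \<Rightarrow> real list \<Rightarrow> real list" where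
  "qdiag S r = map (\<lambda>i. if even i then exp (r ! (i div 2)) else exp (- (r ! (i div 2)))) [0..<2*S]"

definition tdiag :: "nat \<Rightarrow> real list \<Rightarrow> real list" where
  "tdiag S \<nu> = map (\<lambda>i. \<nu> ! (i div 2)) [0..<2*S]"

lemma Qmat_diagm: "Qmat S r = diagm (2*S) (qdiag S r)"
  by (rule eq_matI) (auto simp: Qmat_def diagm_def qdiag_def)

lemma Tmat_diagm: "Tmat S \<nu> = diagm (2*S) (tdiag S \<nu>)"
  by (rule eq_matI) (auto simp: Tmat_def diagm_def tdiag_def)

lemma sum_pairs: "(\<Sum>i<2*(S::nat). g i) = (\<Sum>k<S. g (2*k) + g (2*k+1))"
  by (induct S) (auto simp: sum.distrib ac_simps)

lemma SpO_props:
  assumes W: "W \<in> SpO S"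
  shows "W \<in> carrier_mat (2*S) (2*S)" "W * transpose_mat W = 1\<^sub>m (2*S)"
    "transpose_mat W * Omega S * W = Omega S"
proof -
  show Wc: "W \<in> carrier_mat (2*S) (2*S)" using W unfolding SpO_def by auto
  have WW: "transpose_mat W * W = 1\<^sub>m (2*S)" using W unfolding SpO_def by auto
  have WT: "transpose_mat W \<in> carrier_mat (2*S) (2*S)" using Wc by simp
  show WW': "W * transpose_mat W = 1\<^sub>m (2*S)" using mat_mult_left_right_inverse[OF WT Wc WW] .
  have sym: "W * Omega S * transpose_mat W = Omega S" using W unfolding SpO_def by auto
  have "transpose_mat W * Omega S * W = transpose_mat W * (W * Omega S * transpose_mat W) * W"
    using sym by simp
  also have "\<dots> = (transpose_mat W * W) * Omega S * (transpose_mat W * W)"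
    using Wc WT by (simp add: assoc_dims)
  also have "\<dots> = Omega S" using WW by simp
  finally show "transpose_mat W * Omega S * W = Omega S" .
qed

lemma Qmat_props:
  assumes "length r = S"
  shows "Qmat S r \<in> carrier_mat (2*S) (2*S)" "transpose_mat (Qmat S r) = Qmat S r"
    "transpose_mat (Qmat S r) * Omega S * Qmat S r = Omega S"
proof -
  show Qc: "Qmat S r \<in> carrier_mat (2*S) (2*S)" unfolding Qmat_def by simp
  show QT: "transpose_mat (Qmat S r) = Qmat S r" unfolding Qmat_diagm by (rule diagm_transpose)
  show "transpose_mat (Qmat S r) * Omega S * Qmat S r = Omega S"
    unfolding QT
  proof (rule eq_matI)
    fix i j assume "i < dim_row (Omega S)" "j < dim_col (Omega S)"
    then have i: "i < 2*S" and j: "j < 2*S" by auto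
    have "(Qmat S r * Omega S * Qmat S r) $$ (i,j) = qdiag S r ! i * Omega S $$ (i,j) * qdiag S r ! j"
      unfolding Qmat_diagm
      by (subst diagm_mult_right[of _ "2*S"]) (use i j in \<open>auto simp: diagm_mult_left intro!: mult_carrier_mat[of _ _ "2*S"]\<close>)
    also have "\<dots> = Omega S $$ (i,j)"
    proof (cases "Omega S $$ (i,j) = 0")
      case False
      then have "(even i \<and> j = i + 1) \<or> (odd i \<and> i = j + 1)" using i j by (auto simp: Omega_index split: if_splits)
      then show ?thesis
      proof
        assume "even i \<and> j = i + 1"
        then have "j div 2 = i div 2" "odd j" by auto
        then show ?thesis using i j \<open>even i \<and> j = i + 1\<close> by (simp add: qdiag_def exp_minus field_simps)
      next
        assume "odd i \<and> i = j + 1"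
        then have "j div 2 = i div 2" "even j" by auto
        then show ?thesis using i j \<open>odd i \<and> i = j + 1\<close> by (simp add: qdiag_def exp_minus field_simps)
      qed
    qed simp
    finally show "(Qmat S r * Omega S * Qmat S r) $$ (i,j) = Omega S $$ (i,j)" .
  qed (auto simp: Qmat_def)
qed

lemma inv_step:
  fixes Om R X :: "real mat"
  assumes Om: "Om \<in> carrier_mat n n" and R: "R \<in> carrier_mat n n" and X: "X \<in> carrier_mat n n"
    and RO: "transpose_mat R * Om * R = Om"
  shows "mtr (Om * (R * X * transpose_mat R) * Om * (R * X * transpose_mat R)) = mtr (Om * X * Om * X)"
proof -
  have RT: "transpose_mat R \<in> carrier_mat n n" using R by simp
  define Y where "Y = Om * R * X * transpose_mat R * Om * R * X"
  have Y: "Y \<in> carrier_mat n n" unfolding Y_def using Om R X RT by auto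
  have "Om * (R * X * transpose_mat R) * Om * (R * X * transpose_mat R) = Y * transpose_mat R"
    unfolding Y_def using Om R X RT by (simp add: assoc_dims)
  then have "mtr (Om * (R * X * transpose_mat R) * Om * (R * X * transpose_mat R)) = mtr (transpose_mat R * Y)"
    using mtr_comm[OF Y RT] by simp
  also have "transpose_mat R * Y = (transpose_mat R * Om * R) * X * (transpose_mat R * Om * R) * X"
    unfolding Y_def using Om R X RT by (simp add: assoc_dims)
  also have "\<dots> = Om * X * Om * X" using RO by simp
  finally show ?thesis .
qed

lemma mtr_OTOT:
  assumes len: "length \<nu> = S"
  shows "mtr (Omega S * Tmat S \<nu> * Omega S * Tmat S \<nu>) = - 2 * (\<Sum>k<S. (\<nu> ! k)^2)"
proof -
  let ?n = "2*S"
  let ?T = "Tmat S \<nu>"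
  let ?O = "Omega S"
  have T: "?T \<in> carrier_mat ?n ?n" unfolding Tmat_def by simp
  have Tv: "\<And>w k. w \<in> carrier_vec ?n \<Longrightarrow> k < ?n \<Longrightarrow> (?T *\<^sub>v w) $ k = \<nu> ! (k div 2) * w $ k"
    unfolding Tmat_diagm by (subst diagm_mult_vec) (auto simp: tdiag_def)
  have Tc: "\<And>w. w \<in> carrier_vec ?n \<Longrightarrow> ?T *\<^sub>v w \<in> carrier_vec ?n" using T by simp
  have diag: "\<And>i. i < ?n \<Longrightarrow> (?O * ?T * ?O * ?T) $$ (i,i) = - ((\<nu> ! (i div 2))^2)"
  proof -
    fix i assume i: "i < ?n"
    define e :: "real vec" where "e = unit_vec ?n i"
    have e: "e \<in> carrier_vec ?n" unfolding e_def by simp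
    have M: "?O * ?T * ?O * ?T \<in> carrier_mat ?n ?n" using T by auto
    have "(?O * ?T * ?O * ?T) $$ (i,i) = ((?O * ?T * ?O * ?T) *\<^sub>v e) $ i"
    proof -
      have d: "dim_row (?O * ?T * ?O * ?T) = ?n" "dim_col (?O * ?T * ?O * ?T) = ?n" using M by auto
      have "((?O * ?T * ?O * ?T) *\<^sub>v e) $ i = row (?O * ?T * ?O * ?T) i \<bullet> e" using d i by simp
      also have "\<dots> = row (?O * ?T * ?O * ?T) i $ i" unfolding e_def using i by simp
      also have "\<dots> = (?O * ?T * ?O * ?T) $$ (i,i)" using d i by simp
      finally show ?thesis by simp
    qed
    also have "(?O * ?T * ?O * ?T) *\<^sub>v e = ?O *\<^sub>v (?T *\<^sub>v (?O *\<^sub>v (?T *\<^sub>v e)))"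
      unfolding e_def by (simp add: assoc_mv_dims)
    also have "\<dots> $ i = - ((\<nu> ! (i div 2))^2)"
    proof -
      define w3 where "w3 = ?T *\<^sub>v e"
      define w2 where "w2 = ?O *\<^sub>v w3"
      define w1 where "w1 = ?T *\<^sub>v w2"
      have w3: "w3 \<in> carrier_vec ?n" unfolding w3_def using Tc e by simp
      have w2: "w2 \<in> carrier_vec ?n" unfolding w2_def using w3 by simp
      have w1: "w1 \<in> carrier_vec ?n" unfolding w1_def using Tc w2 by simp
      have w3i: "\<And>k. k < ?n \<Longrightarrow> w3 $ k = (if k = i then \<nu> ! (i div 2) else 0)"
        unfolding w3_def using Tv[OF e] e_def by (auto simp: unit_vec_def)
      show ?thesis
      proof (cases "even i")
        case True
        then have i1: "i + 1 < ?n" "odd (i+1)" "(i + 1) div 2 = i div 2" "i + 1 - 1 = i" using i by presburger+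
        have "(?O *\<^sub>v w1) $ i = w1 $ (i+1)" using Omega_mult_vec[OF w1 i] True by simp
        also have "\<dots> = \<nu> ! (i div 2) * w2 $ (i+1)" unfolding w1_def using Tv[OF w2 i1(1)] i1 by simp
        also have "w2 $ (i+1) = - w3 $ i" unfolding w2_def using Omega_mult_vec[OF w3 i1(1)] i1 by simp
        finally have "(?O *\<^sub>v w1) $ i = - ((\<nu> ! (i div 2))^2)" using w3i[OF i] by (simp add: power2_eq_square)
        then show ?thesis unfolding w1_def w2_def w3_def .
      next
        case False
        then have i1: "i - 1 < ?n" "even (i-1)" "(i - 1) div 2 = i div 2" "i - 1 + 1 = i" using i by presburger+
        have "(?O *\<^sub>v w1) $ i = - w1 $ (i-1)" using Omega_mult_vec[OF w1 i] False by simp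
        also have "w1 $ (i-1) = \<nu> ! (i div 2) * w2 $ (i-1)" unfolding w1_def using Tv[OF w2 i1(1)] i1 by simp
        also have "w2 $ (i-1) = w3 $ i" unfolding w2_def using Omega_mult_vec[OF w3 i1(1)] i1 by simp
        finally have "(?O *\<^sub>v w1) $ i = - ((\<nu> ! (i div 2))^2)" using w3i[OF i] by (simp add: power2_eq_square)
        then show ?thesis unfolding w1_def w2_def w3_def .
      qed
    qed
    finally show "(?O * ?T * ?O * ?T) $$ (i,i) = - ((\<nu> ! (i div 2))^2)" .
  qed
  have "mtr (?O * ?T * ?O * ?T) = (\<Sum>i<?n. - ((\<nu> ! (i div 2))^2))"
    unfolding mtr_def using T diag by simp
  also have "\<dots> = (\<Sum>k<S. (- ((\<nu> ! k)^2)) + (- ((\<nu> ! k)^2)))" by (subst sum_pairs) simp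
  also have "\<dots> = - 2 * (\<Sum>k<S. (\<nu> ! k)^2)" by (simp add: sum_distrib_left sum_negf)
  finally show ?thesis .
qed

lemma params_inv:
  assumes "(\<nu>, r) \<in> CM_params S \<Gamma>"
  shows "mtr (Omega S * \<Gamma> * Omega S * \<Gamma>) = - 2 * (\<Sum>k<S. (\<nu> ! k)^2)"
proof -
  let ?n = "2*S"
  obtain K L where lens: "length r = S" "length \<nu> = S" and K: "K \<in> SpO S" and L: "L \<in> SpO S"
    and G: "\<Gamma> = K * Qmat S r * L * Tmat S \<nu> * transpose_mat L * Qmat S r * transpose_mat K"
    using assms unfolding CM_params_def is_decomposition_def by auto
  note Kp = SpO_props[OF K] and Lp = SpO_props[OF L] and Qp = Qmat_props[OF lens(1)]
  have T: "Tmat S \<nu> \<in> carrier_mat ?n ?n" unfolding Tmat_def by simp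
  define X1 where "X1 = L * Tmat S \<nu> * transpose_mat L"
  define X2 where "X2 = Qmat S r * X1 * transpose_mat (Qmat S r)"
  have X1: "X1 \<in> carrier_mat ?n ?n" unfolding X1_def using Lp T by auto
  have X2: "X2 \<in> carrier_mat ?n ?n" unfolding X2_def using Qp X1 by auto
  have G': "\<Gamma> = K * X2 * transpose_mat K"
    unfolding G X2_def X1_def Qp(2) using Kp Lp Qp T by (simp add: assoc_dims)
  have "mtr (Omega S * \<Gamma> * Omega S * \<Gamma>) = mtr (Omega S * X2 * Omega S * X2)"
    unfolding G' by (rule inv_step[OF Omega_carrier Kp(1) X2 Kp(3)])
  also have "\<dots> = mtr (Omega S * X1 * Omega S * X1)"
    unfolding X2_def by (rule inv_step[OF Omega_carrier Qp(1) X1 Qp(3)])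
  also have "\<dots> = mtr (Omega S * Tmat S \<nu> * Omega S * Tmat S \<nu>)"
    unfolding X1_def by (rule inv_step[OF Omega_carrier Lp(1) T Lp(3)])
  also have "\<dots> = - 2 * (\<Sum>k<S. (\<nu> ! k)^2)" by (rule mtr_OTOT[OF lens(2)])
  finally show ?thesis .
qed



lemma Omega_sum_c:
  fixes v :: "nat \<Rightarrow> complex"
  assumes i: "i < 2*S"
  shows "(\<Sum>q\<in>{0..<2*S}. complex_of_real (Omega S $$ (i,q)) * v q) = (if even i then v (i+1) else - v (i - 1))"
proof -
  have "(\<Sum>q\<in>{0..<2*S}. complex_of_real (Omega S $$ (i,q)) * v q)
      = (\<Sum>q\<in>{0..<2*S}. (if even i \<and> q = i + 1 then v q else if odd i \<and> i = q + 1 then - v q else 0))"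
    by (rule sum.cong) (use i in \<open>auto simp: Omega_index\<close>)
  also have "\<dots> = (if even i then v (i+1) else - v (i - 1))"
  proof (cases "even i")
    case True
    then have "i + 1 < 2*S" using i by presburger
    have "(\<Sum>q\<in>{0..<2*S}. (if even i \<and> q = i + 1 then v q else if odd i \<and> i = q + 1 then - v q else 0))
        = (\<Sum>q\<in>{0..<2*S}. (if q = i + 1 then v q else 0))"
      using True by (intro sum.cong) auto
    then show ?thesis using True \<open>i + 1 < 2*S\<close> by (simp add: sum.delta')
  next
    case False
    then have "i - 1 < 2*S" "i = (i - 1) + 1" using i by presburger+
    then have "(\<Sum>q\<in>{0..<2*S}. (if even i \<and> q = i + 1 then v q else if odd i \<and> i = q + 1 then - v q else 0))
        = (\<Sum>q\<in>{0..<2*S}. (if q = i - 1 then - v q else 0))"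
      using False by (intro sum.cong) auto
    then show ?thesis using False \<open>i - 1 < 2*S\<close> by (simp add: sum.delta')
  qed
  finally show ?thesis .
qed

lemma pair_term:
  fixes x y :: complex and a b :: real
  shows "cnj x * (complex_of_real a * x + \<i> * y) + cnj y * (complex_of_real b * y + \<i> * (- x))
    = complex_of_real (a * (Re x * Re x + Im x * Im x) + b * (Re y * Re y + Im y * Im y) - 2 * (Re x * Im y - Im x * Re y))"
  by (simp add: complex_eq_iff algebra_simps)

lemma pair_nonneg:
  fixes a b x1 x2 y1 y2 :: real
  assumes a: "a > 0" and ab: "a * b \<ge> 1"
  shows "a * (x1 * x1 + x2 * x2) + b * (y1 * y1 + y2 * y2) - 2 * (x1 * y2 - x2 * y1) \<ge> 0"
proof -
  have "a * (a * (x1 * x1 + x2 * x2) + b * (y1 * y1 + y2 * y2) - 2 * (x1 * y2 - x2 * y1))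
      = (a * x1 - y2)^2 + (a * x2 + y1)^2 + (a * b - 1) * (y1 * y1 + y2 * y2)"
    by (simp add: power2_eq_square algebra_simps)
  also have "\<dots> \<ge> 0"
  proof -
    have "y1 * y1 + y2 * y2 \<ge> 0" by simp
    then have "(a * b - 1) * (y1 * y1 + y2 * y2) \<ge> 0" using ab by simp
    then show ?thesis by simp
  qed
  finally show ?thesis using a by (simp add: zero_le_mult_iff)
qed

lemma diag_psd:
  assumes len: "length D = 2*S"
    and pos: "\<And>k. k < S \<Longrightarrow> D ! (2*k) > 0 \<and> D ! (2*k) * D ! (2*k+1) \<ge> 1"
  shows "psd_complex (2*S) (map_mat complex_of_real (diagm (2*S) D) + \<i> \<cdot>\<^sub>m map_mat complex_of_real (Omega S))"
  unfolding psd_complex_def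
proof (intro conjI ballI)
  let ?M = "map_mat complex_of_real (diagm (2*S) D) + \<i> \<cdot>\<^sub>m map_mat complex_of_real (Omega S)"
  show M: "?M \<in> carrier_mat (2*S) (2*S)" by auto
  fix v :: "complex vec" assume v: "v \<in> carrier_vec (2*S)"
  have Mv: "\<And>p. p < 2*S \<Longrightarrow> (?M *\<^sub>v v) $ p = complex_of_real (D ! p) * v $ p + \<i> * (if even p then v $ (p+1) else - v $ (p - 1))"
  proof -
    fix p assume p: "p < 2*S"
    have "(?M *\<^sub>v v) $ p = (\<Sum>q\<in>{0..<2*S}. ?M $$ (p,q) * v $ q)"
      using p v M by (auto simp: scalar_prod_def intro!: sum.cong)
    also have "\<dots> = (\<Sum>q\<in>{0..<2*S}. (if p = q then complex_of_real (D ! p) * v $ q else 0)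
        + \<i> * (complex_of_real (Omega S $$ (p,q)) * v $ q))"
      by (intro sum.cong) (use p in \<open>auto simp: diagm_def algebra_simps\<close>)
    also have "\<dots> = complex_of_real (D ! p) * v $ p + \<i> * (\<Sum>q\<in>{0..<2*S}. complex_of_real (Omega S $$ (p,q)) * v $ q)"
      using p by (simp add: sum.distrib sum_distrib_left)
    also have "\<dots> = complex_of_real (D ! p) * v $ p + \<i> * (if even p then v $ (p+1) else - v $ (p - 1))"
      using Omega_sum_c[OF p, of "\<lambda>q. v $ q"] by simp
    finally show "(?M *\<^sub>v v) $ p = complex_of_real (D ! p) * v $ p + \<i> * (if even p then v $ (p+1) else - v $ (p - 1))" .
  qed
  define c where "c = (\<lambda>k. D ! (2*k) * (Re (v $ (2*k)) * Re (v $ (2*k)) + Im (v $ (2*k)) * Im (v $ (2*k)))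
     + D ! (2*k+1) * (Re (v $ (2*k+1)) * Re (v $ (2*k+1)) + Im (v $ (2*k+1)) * Im (v $ (2*k+1)))
     - 2 * (Re (v $ (2*k)) * Im (v $ (2*k+1)) - Im (v $ (2*k)) * Re (v $ (2*k+1))))"
  have "conjugate v \<bullet> (?M *\<^sub>v v) = (\<Sum>p<2*S. cnj (v $ p) * (?M *\<^sub>v v) $ p)"
    using v M by (auto simp: scalar_prod_def conjugate_vec_def lessThan_atLeast0 intro!: sum.cong)
  also have "\<dots> = (\<Sum>k<S. cnj (v $ (2*k)) * (?M *\<^sub>v v) $ (2*k) + cnj (v $ (2*k+1)) * (?M *\<^sub>v v) $ (2*k+1))"
    by (rule sum_pairs)
  also have "\<dots> = (\<Sum>k<S. complex_of_real (c k))"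
  proof (rule sum.cong[OF refl])
    fix k assume k: "k \<in> {..<S}"
    then have k1: "2*k < 2*S" "2*k+1 < 2*S" by auto
    show "cnj (v $ (2*k)) * (?M *\<^sub>v v) $ (2*k) + cnj (v $ (2*k+1)) * (?M *\<^sub>v v) $ (2*k+1) = complex_of_real (c k)"
      unfolding Mv[OF k1(1)] Mv[OF k1(2)] c_def using pair_term[of "v $ (2*k)" "D ! (2*k)" "v $ (2*k+1)" "D ! (2*k+1)"]
      by simp
  qed
  also have "\<dots> = complex_of_real (\<Sum>k<S. c k)" by simp
  finally have eq: "conjugate v \<bullet> (?M *\<^sub>v v) = complex_of_real (\<Sum>k<S. c k)" .
  show "conjugate v \<bullet> (?M *\<^sub>v v) \<in> \<real>" unfolding eq by simp
  have "(\<Sum>k<S. c k) \<ge> 0"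
  proof (rule sum_nonneg)
    fix k assume "k \<in> {..<S}"
    then show "c k \<ge> 0" unfolding c_def using pos[of k] by (intro pair_nonneg) auto
  qed
  then show "Re (conjugate v \<bullet> (?M *\<^sub>v v)) \<ge> 0" unfolding eq by simp
qed

lemma exp_sqrt_lemma:
  fixes a b :: real
  assumes a: "a > 0" and b: "b > 0"
  shows "exp (ln (a/b)/4) * sqrt (a*b) * exp (ln (a/b)/4) = a"
    and "exp (- (ln (a/b)/4)) * sqrt (a*b) * exp (- (ln (a/b)/4)) = b"
proof -
  have sq: "\<And>y::real. y > 0 \<Longrightarrow> exp (ln y / 2) = sqrt y"
  proof -
    fix y :: real assume y: "y > 0"
    have "sqrt y = y powr (1/2)" using powr_half_sqrt[of y] y by simp
    also have "\<dots> = exp (ln y / 2)" using y by (simp add: powr_def)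
    finally show "exp (ln y / 2) = sqrt y" by simp
  qed
  have "exp (ln (a/b)/4) * exp (ln (a/b)/4) = exp (ln (a/b)/2)" by (simp flip: exp_add)
  also have "\<dots> = sqrt (a/b)" using a b by (intro sq) simp
  finally have e1: "exp (ln (a/b)/4) * exp (ln (a/b)/4) = sqrt (a/b)" .
  have "exp (- (ln (a/b)/4)) * exp (- (ln (a/b)/4)) = exp (ln (b/a)/2)"
    using a b by (simp add: ln_div field_simps flip: exp_add)
  also have "\<dots> = sqrt (b/a)" using a b by (intro sq) simp
  finally have e2: "exp (- (ln (a/b)/4)) * exp (- (ln (a/b)/4)) = sqrt (b/a)" .
  have "exp (ln (a/b)/4) * sqrt (a*b) * exp (ln (a/b)/4) = sqrt (a/b) * sqrt (a*b)"
    using e1 by (simp add: algebra_simps)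
  also have "\<dots> = sqrt (a * a)" using a b by (simp flip: real_sqrt_mult)
  also have "\<dots> = a" using a by simp
  finally show "exp (ln (a/b)/4) * sqrt (a*b) * exp (ln (a/b)/4) = a" .
  have "exp (- (ln (a/b)/4)) * sqrt (a*b) * exp (- (ln (a/b)/4)) = sqrt (b/a) * sqrt (a*b)"
    using e2 by (simp add: algebra_simps)
  also have "\<dots> = sqrt (b * b)" using a b by (simp flip: real_sqrt_mult)
  also have "\<dots> = b" using b by simp
  finally show "exp (- (ln (a/b)/4)) * sqrt (a*b) * exp (- (ln (a/b)/4)) = b" .
qed

lemma matching_half:
  assumes len: "length L = 2*S" and pm: "perfect_matching L m"
  shows "card {i. i < 2*S \<and> i < m i} = S"
proof -
  define A where "A = {i. i < 2*S \<and> i < m i}"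
  define B where "B = {i. i < 2*S \<and> m i < i}"
  have mp: "\<And>i. i < 2*S \<Longrightarrow> m i < 2*S \<and> m (m i) = i \<and> m i \<noteq> i"
    using pm len unfolding perfect_matching_def G_edge_def by fastforce
  have inj: "inj_on m A" by (rule inj_onI) (metis A_def mem_Collect_eq mp)
  have img: "m ` A = B"
  proof
    show "m ` A \<subseteq> B" using mp unfolding A_def B_def by auto
    show "B \<subseteq> m ` A"
    proof
      fix x assume x: "x \<in> B"
      then have "m x \<in> A" "m (m x) = x" using mp unfolding A_def B_def by auto
      then show "x \<in> m ` A" by (metis imageI)
    qed
  qed
  have cB: "card B = card A" using card_image[OF inj] img by simp
  have un: "A \<union> B = {0..<2*S}"
  proof
    show "A \<union> B \<subseteq> {0..<2*S}" unfolding A_def B_def by auto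
    show "{0..<2*S} \<subseteq> A \<union> B"
    proof
      fix x assume "x \<in> {0..<2*S}"
      then have "x < 2*S" by simp
      then have "m x \<noteq> x" using mp by blast
      then show "x \<in> A \<union> B" using \<open>x < 2*S\<close> unfolding A_def B_def by (auto simp: nat_neq_iff)
    qed
  qed
  have dis: "A \<inter> B = {}" unfolding A_def B_def by auto
  have "card A + card B = 2*S"
    using card_Un_disjoint[of A B] un dis unfolding A_def B_def by simp
  then show ?thesis using cB unfolding A_def by simp
qed

lemma one_SpO: "1\<^sub>m (2*S) \<in> SpO S"
  unfolding SpO_def using Omega_carrier[of S] by simp

lemma construct:
  assumes len: "length L = 2*S" and pos: "\<forall>k<2*S. L ! k > 0" and pm: "perfect_matching L m"
    and sorted: "sorted_wrt (\<ge>) L"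
  shows "\<exists>\<Gamma> \<nu> r. quantum_CM S \<Gamma> \<and> eigenspectrum S \<Gamma> L \<and> (\<nu>, r) \<in> CM_params S \<Gamma>
      \<and> 2 * (\<Sum>k<S. (\<nu> ! k)^2) = Fm L m \<and> (\<forall>W\<in>SpO S. (\<nu>, r) \<in> CM_params S (W * \<Gamma> * transpose_mat W))"
proof -
  let ?n = "2*S"
  have mp: "\<And>i. i < ?n \<Longrightarrow> m i < ?n \<and> m (m i) = i \<and> L ! i * L ! (m i) \<ge> 1"
    using pm len unfolding perfect_matching_def G_edge_def by fastforce
  define A where "A = {i. i < ?n \<and> i < m i}"
  have finA: "finite A" unfolding A_def by simp
  have cA: "card A = S" unfolding A_def by (rule matching_half[OF len pm])
  define xs where "xs = sorted_list_of_set A"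
  have xs: "distinct xs" "set xs = A" "length xs = S" unfolding xs_def using finA cA by auto
  define \<sigma> where "\<sigma> = (\<lambda>k. xs ! k)"
  have \<sigma>A: "\<And>k. k < S \<Longrightarrow> \<sigma> k \<in> A" unfolding \<sigma>_def using xs by (metis nth_mem)
  have \<sigma>inj: "\<And>k1 k2. k1 < S \<Longrightarrow> k2 < S \<Longrightarrow> \<sigma> k1 = \<sigma> k2 \<Longrightarrow> k1 = k2"
    unfolding \<sigma>_def using xs nth_eq_iff_index_eq by metis
  have \<sigma>n: "\<And>k. k < S \<Longrightarrow> \<sigma> k < ?n \<and> \<sigma> k < m (\<sigma> k)" using \<sigma>A unfolding A_def by auto
  define f where "f = (\<lambda>q. if even q then \<sigma> (q div 2) else m (\<sigma> (q div 2)))"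
  have fn: "\<And>q. q < ?n \<Longrightarrow> f q < ?n"
  proof -
    fix q assume "q < ?n"
    then have "q div 2 < S" by simp
    then show "f q < ?n" unfolding f_def using \<sigma>n mp by auto
  qed
  have finj: "inj_on f {0..<?n}"
  proof (rule inj_onI)
    fix q1 q2 assume q1: "q1 \<in> {0..<?n}" and q2: "q2 \<in> {0..<?n}" and e: "f q1 = f q2"
    have k1: "q1 div 2 < S" and k2: "q2 div 2 < S" using q1 q2 by auto
    note s1 = \<sigma>n[OF k1] and s2 = \<sigma>n[OF k2]
    note m1 = mp[OF s1[THEN conjunct1]] and m2 = mp[OF s2[THEN conjunct1]]
    show "q1 = q2"
    proof (cases "even q1"; cases "even q2")
      assume "even q1" "even q2"
      then have "\<sigma> (q1 div 2) = \<sigma> (q2 div 2)" using e unfolding f_def by simp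
      then have "q1 div 2 = q2 div 2" using \<sigma>inj k1 k2 by blast
      then show ?thesis using \<open>even q1\<close> \<open>even q2\<close> by (metis dvd_mult_div_cancel)
    next
      assume "\<not> even q1" "\<not> even q2"
      then have "m (\<sigma> (q1 div 2)) = m (\<sigma> (q2 div 2))" using e unfolding f_def by simp
      then have "\<sigma> (q1 div 2) = \<sigma> (q2 div 2)" using m1 m2 by metis
      then have "q1 div 2 = q2 div 2" using \<sigma>inj k1 k2 by blast
      then show ?thesis using \<open>\<not> even q1\<close> \<open>\<not> even q2\<close> by (metis div_mult_mod_eq odd_iff_mod_2_eq_one)
    next
      assume "even q1" "\<not> even q2"
      then have "\<sigma> (q1 div 2) = m (\<sigma> (q2 div 2))" using e unfolding f_def by simp
      then have False using s1 s2 m2 by (metis less_not_sym)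
      then show ?thesis ..
    next
      assume "\<not> even q1" "even q2"
      then have "m (\<sigma> (q1 div 2)) = \<sigma> (q2 div 2)" using e unfolding f_def by simp
      then have False using s1 s2 m1 by (metis less_not_sym)
      then show ?thesis ..
    qed
  qed
  have fbij: "bij_betw f {0..<?n} {0..<?n}"
  proof -
    have "f ` {0..<?n} \<subseteq> {0..<?n}" using fn by auto
    then have "f ` {0..<?n} = {0..<?n}" using endo_inj_surj[of "{0..<?n}" f] finj by simp
    then show ?thesis unfolding bij_betw_def using finj by simp
  qed
  define a where "a = (\<lambda>k. L ! (\<sigma> k))"
  define b where "b = (\<lambda>k. L ! (m (\<sigma> k)))"
  have ab: "\<And>k. k < S \<Longrightarrow> a k > 0 \<and> b k > 0 \<and> a k * b k \<ge> 1"
    unfolding a_def b_def using \<sigma>n mp pos by auto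
  define \<nu> where "\<nu> = map (\<lambda>k. sqrt (a k * b k)) [0..<S]"
  define r where "r = map (\<lambda>k. ln (a k / b k) / 4) [0..<S]"
  define D where "D = map (\<lambda>q. L ! (f q)) [0..<?n]"
  define \<Gamma> where "\<Gamma> = diagm ?n D"
  have lenD: "length D = ?n" unfolding D_def by simp
  have D2: "\<And>k. k < S \<Longrightarrow> D ! (2*k) = a k \<and> D ! (2*k+1) = b k"
    unfolding D_def a_def b_def f_def by auto
  have Dpos: "\<And>q. q < ?n \<Longrightarrow> D ! q > 0" unfolding D_def using fn pos by auto
  have G: "\<Gamma> \<in> carrier_mat ?n ?n" unfolding \<Gamma>_def by simp
  have Qc: "Qmat S r \<in> carrier_mat ?n ?n" unfolding Qmat_def by simp
  have Tc: "Tmat S \<nu> \<in> carrier_mat ?n ?n" unfolding Tmat_def by simp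
  have GQT: "\<Gamma> = Qmat S r * Tmat S \<nu> * Qmat S r"
  proof (rule eq_matI)
    fix i j assume "i < dim_row (Qmat S r * Tmat S \<nu> * Qmat S r)" "j < dim_col (Qmat S r * Tmat S \<nu> * Qmat S r)"
    then have i: "i < ?n" and j: "j < ?n" using Qc by auto
    have QT: "Qmat S r * Tmat S \<nu> \<in> carrier_mat ?n ?n" using Qc Tc by auto
    have "(Qmat S r * Tmat S \<nu> * Qmat S r) $$ (i,j) = qdiag S r ! i * Tmat S \<nu> $$ (i,j) * qdiag S r ! j"
      using diagm_mult_right[OF QT i j, of "qdiag S r"] diagm_mult_left[OF Tc i j, of "qdiag S r"]
      unfolding Qmat_diagm by simp
    also have "\<dots> = \<Gamma> $$ (i,j)"
    proof (cases "i = j")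
      case False
      then show ?thesis using i j unfolding \<Gamma>_def Tmat_def diagm_def by simp
    next
      case True
      define k where "k = i div 2"
      have k: "k < S" using i unfolding k_def by simp
      have rk: "r ! k = ln (a k / b k) / 4" and nk: "\<nu> ! k = sqrt (a k * b k)"
        using k unfolding r_def \<nu>_def by auto
      have Ti: "Tmat S \<nu> $$ (i,i) = \<nu> ! k" using i unfolding Tmat_def k_def by simp
      show ?thesis
      proof (cases "even i")
        case ev: True
        then have "i = 2*k" unfolding k_def by simp
        then have "D ! i = a k" using D2[OF k] by simp
        moreover have "qdiag S r ! i = exp (r ! k)" using i ev unfolding qdiag_def k_def by simp
        ultimately show ?thesis using True Ti i rk nk exp_sqrt_lemma(1)[of "a k" "b k"] ab[OF k]
          unfolding \<Gamma>_def diagm_def by simp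
      next
        case od: False
        then have "i = 2*k+1" unfolding k_def by presburger
        then have "D ! i = b k" using D2[OF k] by simp
        moreover have "qdiag S r ! i = exp (- (r ! k))" using i od unfolding qdiag_def k_def by simp
        ultimately show ?thesis using True Ti i rk nk exp_sqrt_lemma(2)[of "a k" "b k"] ab[OF k]
          unfolding \<Gamma>_def diagm_def by simp
      qed
    qed
    finally show "\<Gamma> $$ (i,j) = (Qmat S r * Tmat S \<nu> * Qmat S r) $$ (i,j)" by simp
  qed (use G Qc Tc in auto)
  have QCM: "quantum_CM S \<Gamma>"
    unfolding quantum_CM_def
  proof (intro conjI)
    show "\<Gamma> \<in> carrier_mat ?n ?n" by (rule G)
    show "transpose_mat \<Gamma> = \<Gamma>" unfolding \<Gamma>_def by (rule diagm_transpose)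
    show "pos_def_real ?n \<Gamma>" unfolding pos_def_real_def
    proof (intro ballI impI)
      fix v :: "real vec" assume v: "v \<in> carrier_vec ?n" and v0: "v \<noteq> 0\<^sub>v ?n"
      obtain q where q: "q < ?n" "v $ q \<noteq> 0"
      proof -
        have "\<exists>q<?n. v $ q \<noteq> 0"
        proof (rule ccontr)
          assume "\<not> (\<exists>q<?n. v $ q \<noteq> 0)"
          then have "v = 0\<^sub>v ?n" using v by (intro eq_vecI) auto
          then show False using v0 by simp
        qed
        then show ?thesis using that by blast
      qed
      have "v \<bullet> (\<Gamma> *\<^sub>v v) = (\<Sum>p\<in>{0..<?n}. v $ p * (D ! p * v $ p))"
      proof -
        have "v \<bullet> (\<Gamma> *\<^sub>v v) = (\<Sum>p\<in>{0..<?n}. v $ p * (\<Gamma> *\<^sub>v v) $ p)"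
          using v G by (simp add: scalar_prod_def)
        also have "\<dots> = (\<Sum>p\<in>{0..<?n}. v $ p * (D ! p * v $ p))"
          unfolding \<Gamma>_def by (intro sum.cong refl) (use v in \<open>simp add: diagm_mult_vec\<close>)
        finally show ?thesis .
      qed
      also have "\<dots> > 0"
      proof (rule sum_pos2[of _ q])
        have "v $ q * v $ q > 0" using q(2) by (simp add: zero_less_mult_iff linorder_neq_iff disj_commute)
        then show "v $ q * (D ! q * v $ q) > 0" using Dpos[OF q(1)]
          by (simp add: mult.left_commute)
        show "\<And>p. p \<in> {0..<?n} \<Longrightarrow> 0 \<le> v $ p * (D ! p * v $ p)"
        proof -
          fix p assume "p \<in> {0..<?n}"
          then have "D ! p \<ge> 0" using Dpos by (auto intro: less_imp_le)
          moreover have "v $ p * v $ p \<ge> 0" by simp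
          ultimately have "D ! p * (v $ p * v $ p) \<ge> 0" by simp
          then show "0 \<le> v $ p * (D ! p * v $ p)" by (simp add: mult.left_commute)
        qed
      qed (use q in auto)
      finally show "v \<bullet> (\<Gamma> *\<^sub>v v) > 0" .
    qed
    show "psd_complex ?n (map_mat complex_of_real \<Gamma> + \<i> \<cdot>\<^sub>m map_mat complex_of_real (Omega S))"
      unfolding \<Gamma>_def by (rule diag_psd[OF lenD]) (use D2 ab in auto)
  qed
  have ES: "eigenspectrum S \<Gamma> L"
    unfolding eigenspectrum_def
  proof (intro conjI)
    show "\<Gamma> \<in> carrier_mat ?n ?n" by (rule G)
    show "length L = ?n" by (rule len)
    show "sorted_wrt (\<ge>) L" by (rule sorted)
    have ut: "upper_triangular \<Gamma>" unfolding upper_triangular_def \<Gamma>_def diagm_def by auto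
    have dm: "diag_mat \<Gamma> = D" unfolding diag_mat_def \<Gamma>_def D_def by (auto simp: diagm_def)
    have "char_poly \<Gamma> = (\<Prod>x\<leftarrow>D. [:- x, 1:])"
      using char_poly_upper_triangular[OF G ut] dm by simp
    also have "\<dots> = (\<Prod>q\<in>{0..<?n}. [:- (L ! (f q)), 1:])"
      unfolding D_def using prod.distinct_set_conv_list[of "[0..<?n]" "\<lambda>q. [:- (L ! (f q)), 1:]"] by (simp add: comp_def)
    also have "\<dots> = (\<Prod>i\<in>{0..<?n}. [:- (L ! i), 1:])"
      by (rule prod.reindex_bij_betw[OF fbij, of "\<lambda>i. [:- (L ! i), 1:]"])
    also have "\<dots> = (\<Prod>x\<leftarrow>L. [:- x, 1:])"
    proof -
      have "(\<Prod>x\<leftarrow>L. [:- x, 1:]) = (\<Prod>x\<leftarrow>map (\<lambda>i. L ! i) [0..<length L]. [:- x, 1:])"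
        by (simp add: map_nth)
      also have "\<dots> = (\<Prod>i\<in>{0..<?n}. [:- (L ! i), 1:])"
        using len prod.distinct_set_conv_list[of "[0..<?n]" "\<lambda>i. [:- (L ! i), 1:]"] by (simp add: comp_def)
      finally show ?thesis by simp
    qed
    finally show "char_poly \<Gamma> = (\<Prod>x\<leftarrow>L. [:- x, 1:])" .
  qed
  have lens: "length r = S" "length \<nu> = S" unfolding r_def \<nu>_def by auto
  have nu1: "\<forall>x\<in>set \<nu>. x \<ge> 1" unfolding \<nu>_def using ab by auto
  have dec: "\<And>W. W \<in> SpO S \<Longrightarrow> (\<nu>, r) \<in> CM_params S (W * \<Gamma> * transpose_mat W)"
  proof -
    fix W assume W: "W \<in> SpO S"
    have Wc: "W \<in> carrier_mat ?n ?n" using SpO_props[OF W] by simp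
    have "W * \<Gamma> * transpose_mat W = W * Qmat S r * 1\<^sub>m ?n * Tmat S \<nu> * transpose_mat (1\<^sub>m ?n) * Qmat S r * transpose_mat W"
      unfolding GQT using Wc Qc Tc by (simp add: assoc_dims)
    then show "(\<nu>, r) \<in> CM_params S (W * \<Gamma> * transpose_mat W)"
      unfolding CM_params_def is_decomposition_def using lens nu1 W one_SpO by blast
  qed
  have inP: "(\<nu>, r) \<in> CM_params S \<Gamma>"
  proof -
    have "(\<nu>, r) \<in> CM_params S (1\<^sub>m ?n * \<Gamma> * transpose_mat (1\<^sub>m ?n))" by (rule dec[OF one_SpO])
    then show ?thesis using G by simp
  qed
  have Fm_eq: "2 * (\<Sum>k<S. (\<nu> ! k)^2) = Fm L m"
  proof -
    have "Fm L m = (\<Sum>i\<in>{0..<?n}. L ! i * L ! (m i))" unfolding Fm_def len by (simp add: lessThan_atLeast0)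
    also have "\<dots> = (\<Sum>q\<in>{0..<?n}. L ! (f q) * L ! (m (f q)))"
      by (rule sum.reindex_bij_betw[OF fbij, of "\<lambda>i. L ! i * L ! (m i)", symmetric])
    also have "\<dots> = (\<Sum>q<?n. L ! (f q) * L ! (m (f q)))" by (simp add: lessThan_atLeast0)
    also have "\<dots> = (\<Sum>k<S. L ! (f (2*k)) * L ! (m (f (2*k))) + L ! (f (2*k+1)) * L ! (m (f (2*k+1))))"
      by (rule sum_pairs)
    also have "\<dots> = (\<Sum>k<S. 2 * (a k * b k))"
    proof (rule sum.cong[OF refl])
      fix k assume "k \<in> {..<S}"
      then have k: "k < S" by simp
      have "m (m (\<sigma> k)) = \<sigma> k" using mp \<sigma>n[OF k] by blast
      then show "L ! (f (2*k)) * L ! (m (f (2*k))) + L ! (f (2*k+1)) * L ! (m (f (2*k+1))) = 2 * (a k * b k)"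
        unfolding f_def a_def b_def by simp
    qed
    also have "\<dots> = 2 * (\<Sum>k<S. (\<nu> ! k)^2)"
      unfolding sum_distrib_left[symmetric] \<nu>_def using ab by (intro arg_cong[where f="\<lambda>x. 2 * x"] sum.cong) (auto intro!: real_sqrt_pow2[symmetric] less_imp_le mult_pos_pos)
    finally show ?thesis by simp
  qed
  show ?thesis using QCM ES inP Fm_eq dec by blast
qed



theorem mainTheorem9:
  fixes S :: nat and \<Lambda> :: "real list" and \<Gamma>0 :: "real mat"
  assumes "S \<ge> 1"
    and "quantum_CM S \<Gamma>0"
    and "eigenspectrum S \<Gamma>0 \<Lambda>"
    and "\<not> unique_pairing \<Lambda>"
  shows "\<exists>\<Gamma>1 \<Gamma>2. quantum_CM S \<Gamma>1 \<and> quantum_CM S \<Gamma>2 \<and>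
           eigenspectrum S \<Gamma>1 \<Lambda> \<and> eigenspectrum S \<Gamma>2 \<Lambda> \<and>
           CM_params S \<Gamma>1 \<noteq> CM_params S \<Gamma>2 \<and>
           \<not> (\<exists>W \<in> SpO S. \<Gamma>2 = W * \<Gamma>1 * transpose_mat W)"
proof -
  note Q = assms(2) and E = assms(3) and nu = assms(4)
  have G: "\<Gamma>0 \<in> carrier_mat (2*S) (2*S)" and sym: "transpose_mat \<Gamma>0 = \<Gamma>0"
    using Q unfolding quantum_CM_def by auto
  have len: "length \<Lambda> = 2*S" and sorted: "sorted_wrt (\<ge>) \<Lambda>"
    and cp: "char_poly \<Gamma>0 = (\<Prod>x\<leftarrow>\<Lambda>. [:- x, 1:])"
    using E unfolding eigenspectrum_def by auto
  obtain P where P: "P \<in> carrier_mat (2*S) (2*S)" and PP: "transpose_mat P * P = 1\<^sub>m (2*S)"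
    and D: "transpose_mat P * \<Gamma>0 * P = diagm (2*S) \<Lambda>"
    using spectral[OF G sym cp] by blast
  have pos: "\<forall>k<2*S. \<Lambda> ! k > 0" using cm_eig_pos[OF Q P PP D] by blast
  have pair: "\<forall>j<length \<Lambda>. \<Lambda> ! j * \<Lambda> ! (length \<Lambda> - 1 - j) \<ge> 1"
    using cm_pair[OF Q P PP D sorted len] len by simp
  have ev: "even (length \<Lambda>)" using len by simp
  obtain m1 m2 where pm1: "perfect_matching \<Lambda> m1" and pm2: "perfect_matching \<Lambda> m2"
    and Flt: "Fm \<Lambda> m1 < Fm \<Lambda> m2"
    using two_values[OF sorted ev _ pair nu] pos len by auto
  obtain \<Gamma>1 \<nu>1 r1 where G1: "quantum_CM S \<Gamma>1" "eigenspectrum S \<Gamma>1 \<Lambda>" "(\<nu>1, r1) \<in> CM_params S \<Gamma>1"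
    "2 * (\<Sum>k<S. (\<nu>1 ! k)^2) = Fm \<Lambda> m1" "\<forall>W\<in>SpO S. (\<nu>1, r1) \<in> CM_params S (W * \<Gamma>1 * transpose_mat W)"
    using construct[OF len pos pm1 sorted] by blast
  obtain \<Gamma>2 \<nu>2 r2 where G2: "quantum_CM S \<Gamma>2" "eigenspectrum S \<Gamma>2 \<Lambda>" "(\<nu>2, r2) \<in> CM_params S \<Gamma>2"
    "2 * (\<Sum>k<S. (\<nu>2 ! k)^2) = Fm \<Lambda> m2"
    using construct[OF len pos pm2 sorted] by blast
  have key: "(\<nu>1, r1) \<notin> CM_params S \<Gamma>2"
  proof
    assume "(\<nu>1, r1) \<in> CM_params S \<Gamma>2"
    from params_inv[OF this] params_inv[OF G2(3)]
    have "(\<Sum>k<S. (\<nu>1 ! k)^2) = (\<Sum>k<S. (\<nu>2 ! k)^2)" by simp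
    then show False using G1(4) G2(4) Flt by simp
  qed
  have "CM_params S \<Gamma>1 \<noteq> CM_params S \<Gamma>2" using key G1(3) by blast
  moreover have "\<not> (\<exists>W \<in> SpO S. \<Gamma>2 = W * \<Gamma>1 * transpose_mat W)"
    using key G1(5) by blast
  ultimately show ?thesis using G1(1,2) G2(1,2) by blast
qed



end
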